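(* In the setting of the context, for every $T>0$ and $\eta>0$ there exists a compact set $\mathbf K\subset\mathbf M_1$ such that $$\liminf_{r\to\infty}\mathbf P^r\big(\overline{\mathcal Z}^r(t)\in\mathbf K\text{ for all }t\in[0,T]\big)\ge1-\eta.$$
   Context: $\overline{\mathbb R}_+=[0,\infty]$; $\mathbf M_1$ is the space of finite nonnegative Borel measures on $\overline{\mathbb R}_+^2$ with the weak topology. Fluid data: $\lambda>0$; $\vartheta$ a Borel probability measure on $\overline{\mathbb R}_+^2$ with no mass on $\{0\}\times\overline{\mathbb R}_+$, $\overline{\mathbb R}_+\times\{0\}$, $\{(\infty,\infty)\}$, with $\rho=\lambda\mathbf E[B]>1$ for $(B,D)\sim\vartheta$; $\zeta_0\in\mathbf M_1$ with marginals free of atoms in $[0,\infty)$. Stochastic model: for each $r$ in a sequence $\mathcal R$ increasing to infinity, on $(\Omega^r,\mathcal F^r,\mathbf P^r)$: delayed renewal arrivals $E^r(t)$ of rate $\lambda^r>0$, jump times $U^r_i$; i.i.d. pairs $(B^r_i,D^r_i)$ with law $\vartheta^r$ on $\overline{\mathbb R}_+^2$ (no mass on $\{0\}\times\overline{\mathbb R}_+$, $\overline{\mathbb R}_+\times\{0\}$, $\{(\infty,\infty)\}$); an integer $Z^r(0)\ge0$ with finite mean and i.i.d. initial pairs $(B^{0,r}_j,D^{0,r}_j)$ in $(0,\infty]^2\setminus\{(\infty,\infty)\}$. Processor sharing: $Z^r(t)$ jobs present, $S^r(t)=\int_0^tZ^r(s)^{-1}ds$ (integrand $0$ if $Z^r(s)=0$);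 $B^r_i(t)=(B^r_i-(S^r(t)-S^r(U^r_i)))^+$, $D^r_i(t)=(U^r_i+D^r_i-t)^+$; state descriptor $\mathcal Z^r(t)=\sum_{j\le Z^r(0)}\delta^+_{((B^{0,r}_j-S^r(t))^+,(D^{0,r}_j-t)^+)}+\sum_{i\le E^r(t)}\delta^+_{(B^r_i(t),D^r_i(t))}$, where $\delta^+_{(x,y)}$ is the Dirac mass if $\min\{x,y\}>0$ and $0$ otherwise; $Z^r(t)$ is its total mass. Scaling: $\breve\vartheta^r(F\times G)=\vartheta^r(F\times rG)$, $\overline{\mathcal Z}^r(t)(F\times G)=r^{-1}\mathcal Z^r(rt)(F\times rG)$, $\overline E^r(t)=r^{-1}E^r(rt)$. Assumptions: as $r\to\infty$, $\overline E^r(\cdot)\to\lambda(\cdot)$ ($t\mapsto\lambda t$), $\breve\vartheta^r\to\vartheta$ weakly, $\overline{\mathcal Z}^r(0)\to\zeta_0$ in distribution in $\mathbf M_1$. *)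

theory Defs
  imports "HOL-Probability.Probability"
begin

text \<open>The extended half-line [0,\<infinity>] is rendered as the type ennreal;
  the state space is ennreal \<times> ennreal with the product topology.\<close>

type_synonym pt = "ennreal \<times> ennreal"

definition M1 :: "pt measure set" where
  "M1 = {M. sets M = sets (borel :: pt measure) \<and> emeasure M (space M) < \<infinity>}"

definition bcont :: "(pt \<Rightarrow> real) \<Rightarrow> bool" where
  "bcont f \<longleftrightarrow> continuous_on UNIV f \<and> bounded (range f)"

definition weak_top :: "pt measure topology" where
  "weak_top = topology_generated_by
     {{M \<in> M1. (\<integral>p. f p \<partial>M) \<in> U} | f U. bcont f \<and> open U}"

definition weak_conv :: "(nat \<Rightarrow> pt measure) \<Rightarrow> pt measure \<Rightarrow> bool" where
  "weak_conv Ms M \<longleftrightarrow> (\<forall>f. bcont f \<longrightarrow> (\<lambda>n. \<integral>p. f p \<partial>Ms n) \<longlonglongrightarrow> (\<integral>p. f p \<partial>M))"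

definition conv_distr_M1 :: "(nat \<Rightarrow> 'w measure) \<Rightarrow> (nat \<Rightarrow> 'w \<Rightarrow> pt measure) \<Rightarrow> pt measure \<Rightarrow> bool" where
  "conv_distr_M1 Om X mu \<longleftrightarrow>
     (\<forall>\<Phi>. continuous_map weak_top euclideanreal \<Phi> \<and> bounded (\<Phi> ` M1) \<longrightarrow>
        (\<lambda>n. \<integral>\<omega>. \<Phi> (X n \<omega>) \<partial>Om n) \<longlonglongrightarrow> \<Phi> mu)"

text \<open>Inner and outer probability (coincide with the probability on measurable events).\<close>
definition inner_prob :: "'w measure \<Rightarrow> 'w set \<Rightarrow> real" where
  "inner_prob M A = Sup {measure M B | B. B \<in> sets M \<and> B \<subseteq> A}"

definition outer_prob :: "'w measure \<Rightarrow> 'w set \<Rightarrow> real" where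
  "outer_prob M A = Inf {measure M B | B. B \<in> sets M \<and> A \<subseteq> B}"

text \<open>Point measure with weight c: sum over the list of c \<cdot> \<delta>^+_p, where
  \<delta>^+_(x,y) is the Dirac mass if min x y > 0 and the zero measure otherwise.\<close>
definition ptmeas :: "real \<Rightarrow> pt list \<Rightarrow> pt measure" where
  "ptmeas c ps = measure_of UNIV (sets borel)
     (\<lambda>A. ennreal c * of_nat (length (filter (\<lambda>p. p \<in> A \<and> 0 < fst p \<and> 0 < snd p) ps)))"

text \<open>Delayed renewal arrivals: interarrival times xi 0 (delay), xi 1, xi 2, ...;
  the i-th arrival time (i = 0,1,...) is U i = xi 0 + ... + xi i, and
  E(t) counts arrival times \<le> t.\<close>
definition arr_time :: "(nat \<Rightarrow> real) \<Rightarrow> nat \<Rightarrow> real" where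
  "arr_time xi i = (\<Sum>k\<le>i. xi k)"

definition arr_count :: "(nat \<Rightarrow> real) \<Rightarrow> real \<Rightarrow> nat" where
  "arr_count xi t = card {i. arr_time xi i \<le> t}"

text \<open>The (unfiltered) list of residual (service, patience) pairs at time t:
  initial jobs ((B0_j - S t)^+, (D0_j - t)^+), j < z0, and arrived jobs
  (B_i(t), D_i(t)) for the first E(t) arrivals.\<close>
definition job_pts :: "nat \<Rightarrow> (nat \<Rightarrow> ennreal) \<Rightarrow> (nat \<Rightarrow> ennreal) \<Rightarrow> (nat \<Rightarrow> real)
     \<Rightarrow> (nat \<Rightarrow> ennreal) \<Rightarrow> (nat \<Rightarrow> ennreal) \<Rightarrow> (real \<Rightarrow> real) \<Rightarrow> real \<Rightarrow> pt list" where
  "job_pts z0 B0 D0 xi B D S t =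
     map (\<lambda>j. (B0 j - ennreal (S t), D0 j - ennreal t)) [0..<z0] @
     map (\<lambda>i. (B i - ennreal (S t - S (arr_time xi i)), D i - ennreal (t - arr_time xi i)))
         [0..<arr_count xi t]"

definition state :: "nat \<Rightarrow> (nat \<Rightarrow> ennreal) \<Rightarrow> (nat \<Rightarrow> ennreal) \<Rightarrow> (nat \<Rightarrow> real)
     \<Rightarrow> (nat \<Rightarrow> ennreal) \<Rightarrow> (nat \<Rightarrow> ennreal) \<Rightarrow> (real \<Rightarrow> real) \<Rightarrow> real \<Rightarrow> pt measure" where
  "state z0 B0 D0 xi B D S t = ptmeas 1 (job_pts z0 B0 D0 xi B D S t)"

text \<open>Spatial scaling of the second coordinate: the image measure under
  (x,y) \<mapsto> (x, y/r), so that (rescale r M)(F \<times> G) = M (F \<times> rG).\<close>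
definition rescale :: "real \<Rightarrow> pt measure \<Rightarrow> pt measure" where
  "rescale r M = distr M borel (\<lambda>(x, y). (x, y / ennreal r))"

text \<open>Fluid scaling: \<bar>Z\<bar>^r(t)(F \<times> G) = r^{-1} \<Z>^r(rt)(F \<times> rG).\<close>
definition fluid_scale :: "real \<Rightarrow> (real \<Rightarrow> pt measure) \<Rightarrow> real \<Rightarrow> pt measure" where
  "fluid_scale r Zm t = scale_measure (ennreal (1 / r)) (rescale r (Zm (r * t)))"

end

theory Submission
  imports Defs
begin

definition psi :: "ennreal \<Rightarrow> real" where
  "psi x = enn2real (inverse (1 + x)) / 2"

definition psinv :: "real \<Rightarrow> ennreal" where
  "psinv u = ennreal (1 - 2*u) * inverse (ennreal (2*u))"

lemma psi_range: "0 \<le> psi x \<and> psi x < 1"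
proof (cases x)
  case (real r)
  then have "1 + x = ennreal (1 + r)"
    by (metis ennreal_1 ennreal_plus zero_le_one)
  then have "inverse (1 + x) = ennreal (inverse (1 + r))"
    using real by (simp only:) (rule inverse_ennreal, simp)
  moreover have "inverse (1 + r) \<le> 1" using real by (simp add: field_simps)
  ultimately show ?thesis by (simp add: psi_def)
next
  case top
  then show ?thesis by (simp add: psi_def)
qed

lemma psinv_psi: "psinv (psi x) = x"
proof (cases x)
  case (real r)
  then have "1 + x = ennreal (1 + r)"
    by (metis ennreal_1 ennreal_plus zero_le_one)
  then have "inverse (1 + x) = ennreal (inverse (1 + r))"
    using real by (simp only:) (rule inverse_ennreal, simp)
  then have p: "2 * psi x = inverse (1 + r)" using real by (simp add: psi_def)
  have q: "1 - inverse (1+r) = r / (1 + r)" using real by (simp add: field_simps)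
  have "psinv (psi x) = ennreal (r / (1+r)) * inverse (ennreal (inverse (1 + r)))"
    unfolding psinv_def p q by simp
  also have "inverse (ennreal (inverse (1 + r))) = ennreal (1 + r)"
    using real by (subst inverse_ennreal) auto
  also have "ennreal (r / (1+r)) * ennreal (1 + r) = ennreal (r / (1+r) * (1 + r))"
    using real by (intro ennreal_mult[symmetric]) auto
  also have "r / (1+r) * (1 + r) = r" using real by (simp add: field_simps)
  finally show ?thesis using real by simp
next
  case top
  then show ?thesis by (simp add: psi_def psinv_def)
qed

lemma psinv_cont: "continuous_on UNIV psinv"
  unfolding continuous_on_def
proof safe
  fix u :: real
  have a: "((\<lambda>v. ennreal (1 - 2 * v)) \<longlongrightarrow> ennreal (1 - 2*u)) (at u)"
    by (intro tendsto_intros)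
  have b: "((\<lambda>v. inverse (ennreal (2 * v))) \<longlongrightarrow> inverse (ennreal (2*u))) (at u)"
  proof -
    have "continuous_on UNIV (\<lambda>v::real. inverse (ennreal (2 * v)))"
      by (intro continuous_intros continuous_on_ennreal)
    then show ?thesis by (simp add: continuous_on_def)
  qed
  have c: "\<not> ((ennreal (1 - 2*u) = 0 \<and> inverse (ennreal (2*u)) = \<infinity>) \<or>
             (ennreal (1 - 2*u) = \<infinity> \<and> inverse (ennreal (2*u)) = 0))"
    by (auto simp: ennreal_eq_0_iff)
  show "(psinv \<longlongrightarrow> psinv u) (at u)"
    unfolding psinv_def by (rule tendsto_mult_ennreal[OF a b c])
qed

lemma psi_meas: "psi \<in> borel_measurable borel"
  unfolding psi_def by measurable

definition bitr :: "nat \<Rightarrow> real \<Rightarrow> int" where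
  "bitr k u = \<lfloor>2^(Suc k) * u\<rfloor> mod 2"

lemma floor_double: fixes y :: real shows "\<lfloor>2 * y\<rfloor> = 2 * \<lfloor>y\<rfloor> + \<lfloor>2 * y\<rfloor> mod 2"
proof -
  have a: "2 * \<lfloor>y\<rfloor> \<le> \<lfloor>2 * y\<rfloor>" by (simp add: le_floor_iff)
  have b: "\<lfloor>2 * y\<rfloor> \<le> 2 * \<lfloor>y\<rfloor> + 1"
    by (simp add: floor_le_iff) linarith
  from a b show ?thesis by presburger
qed

lemma floor_step: "\<lfloor>2^(Suc k) * u\<rfloor> = 2 * \<lfloor>2^k * u\<rfloor> + bitr k u"
  using floor_double[of "2^k*u"] by (simp add: bitr_def mult.assoc)

lemma bitr_01: "bitr k u \<in> {0,1}"
proof -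
  have "bitr k u = 0 \<or> bitr k u = 1" unfolding bitr_def
    by (metis even_iff_mod_2_eq_zero odd_iff_mod_2_eq_one)
  then show ?thesis by blast
qed

lemma bitr_real: "real_of_int (bitr k u) = real_of_int \<lfloor>2^(Suc k) * u\<rfloor> - 2 * real_of_int \<lfloor>2^k * u\<rfloor>"
  using floor_step[of k u] by simp

lemma bitr_meas[measurable]: "(\<lambda>u. real_of_int (bitr k u)) \<in> borel_measurable borel"
  unfolding bitr_real by measurable

lemma bits_floor_eq: "\<lfloor>u\<rfloor> = \<lfloor>u'\<rfloor> \<Longrightarrow> (\<forall>k<m. bitr k u = bitr k u') \<Longrightarrow> \<lfloor>2^m * u\<rfloor> = \<lfloor>2^m * u'\<rfloor>"
proof (induction m)
  case 0
  then show ?case by simp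
next
  case (Suc m)
  then show ?case using floor_step[of m u] floor_step[of m u'] by simp
qed

lemma floor_eq_close:
  fixes u u' :: real
  assumes "\<lfloor>2^m * u\<rfloor> = \<lfloor>2^m * u'\<rfloor>"
  shows "\<bar>u - u'\<bar> < 1/2^m"
proof -
  define z where "z = \<lfloor>2^m * u\<rfloor>"
  have "of_int z \<le> 2^m * u" "2^m * u < of_int z + 1"
    "of_int z \<le> 2^m * u'" "2^m * u' < of_int z + 1"
    using assms unfolding z_def
    by (simp_all only: of_int_floor_le real_of_int_floor_add_one_gt) (metis of_int_floor_le real_of_int_floor_add_one_gt)+
  then have "\<bar>2^m * u - 2^m * u'\<bar> < 1" by linarith
  moreover have "2^m * u - 2^m * u' = 2^m * (u - u')" by (simp add: algebra_simps)
  ultimately have "\<bar>u - u'\<bar> * 2^m < 1" by (simp add: abs_mult mult.commute)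
  then show ?thesis by (simp add: field_simps)
qed

definition dig :: "real \<times> real \<Rightarrow> nat \<Rightarrow> int" where
  "dig q j = (if even j then bitr (j div 2) (fst q) else bitr (j div 2) (snd q))"

lemma dig_01: "dig q j \<in> {0,1}"
  unfolding dig_def using bitr_01 by auto

definition cant :: "(nat \<Rightarrow> int) \<Rightarrow> real" where
  "cant a = (\<Sum>j. 2 * real_of_int (a j) / 3^(Suc j))"

lemma geo_summable: "summable (\<lambda>i. 2 / (3::real)^(Suc (i + n)))"
proof -
  have "(\<lambda>i. 2 / (3::real)^(Suc (i + n))) = (\<lambda>i. (2 / 3^(Suc n)) * (1/3)^i)"
    by (auto simp: power_add field_simps)
  moreover have "summable (\<lambda>i. (2 / (3::real)^(Suc n)) * (1/3)^i)"
    by (intro summable_mult summable_geometric) simp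
  ultimately show ?thesis by simp
qed

lemma geo_tail: "(\<Sum>i. 2 / (3::real)^(Suc (i + n))) = 1/3^n"
proof -
  have "(\<lambda>i. 2 / (3::real)^(Suc (i + n))) = (\<lambda>i. (2 / 3^(Suc n)) * (1/3)^i)"
    by (auto simp: power_add field_simps)
  moreover have "(\<Sum>i. (2/3^(Suc n)) * (1/3::real)^i) = (2/3^(Suc n)) * (\<Sum>i. (1/3::real)^i)"
    by (rule suminf_mult[OF summable_geometric]) simp
  ultimately have "(\<Sum>i. 2 / (3::real)^(Suc (i + n))) = (2 / 3^(Suc n)) * (\<Sum>i. (1/3::real)^i)"
    by simp
  also have "(\<Sum>i. (1/3::real)^i) = 3/2"
    by (subst suminf_geometric) auto
  finally show ?thesis by simp
qed

lemma cant_summable: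
  assumes "\<forall>j. a j \<in> {0,1}"
  shows "summable (\<lambda>j. 2 * real_of_int (a j) / 3^(Suc j))"
proof (rule summable_comparison_test)
  have "\<bar>real_of_int (a n)\<bar> \<le> 1" for n using assms[rule_format, of n] by auto
  then show "\<exists>N. \<forall>n\<ge>N. norm (2 * real_of_int (a n) / 3^(Suc n)) \<le> 2 / 3^(Suc (n + 0))"
    by (auto simp: field_simps abs_mult)
  show "summable (\<lambda>n. 2 / (3::real)^(Suc (n + 0)))" by (rule geo_summable)
qed

lemma cant_range:
  assumes "\<forall>j. a j \<in> {0,1}"
  shows "0 \<le> cant a \<and> cant a \<le> 1"
proof
  have "0 \<le> real_of_int (a n)" for n using assms[rule_format, of n] by auto
  then show "0 \<le> cant a" unfolding cant_def
    using assms by (intro suminf_nonneg cant_summable) auto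
  have "real_of_int (a n) \<le> 1" for n using assms[rule_format, of n] by auto
  then have "cant a \<le> (\<Sum>i. 2 / (3::real)^(Suc (i + 0)))" unfolding cant_def
    using assms by (intro suminf_le cant_summable geo_summable) (auto simp: field_simps)
  then show "cant a \<le> 1" using geo_tail[of 0] by simp
qed

lemma cant_sep:
  assumes a: "\<forall>j. a j \<in> {0,1}" and b: "\<forall>j. b j \<in> {0,1}"
    and eq: "\<forall>i<j. a i = b i" and ne: "a j \<noteq> b j"
  shows "1/3^(Suc j) \<le> \<bar>cant a - cant b\<bar>"
proof -
  define d where "d i = 2 * real_of_int (a i - b i) / 3^(Suc i)" for i
  have dd: "d = (\<lambda>i. 2 * real_of_int (a i) / 3^(Suc i) - 2 * real_of_int (b i) / 3^(Suc i))"
    by (auto simp: d_def field_simps)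
  have sd: "summable d" unfolding dd
    using cant_summable[OF a] cant_summable[OF b] by (rule summable_diff)
  have "cant a - cant b = suminf d" unfolding dd cant_def
    using cant_summable[OF a] cant_summable[OF b] by (rule suminf_diff)
  also have "\<dots> = (\<Sum>i. d (i + Suc j)) + (\<Sum>i<Suc j. d i)"
    by (rule suminf_split_initial_segment[OF sd])
  also have "(\<Sum>i<Suc j. d i) = d j"
    using eq by (simp add: d_def)
  finally have e: "cant a - cant b = (\<Sum>i. d (i + Suc j)) + d j" .
  have bnd: "\<bar>d i\<bar> \<le> 2 / 3^(Suc i)" for i
  proof -
    have "\<bar>real_of_int (a i - b i)\<bar> \<le> 1" using a[rule_format, of i] b[rule_format, of i] by auto
    then show ?thesis by (auto simp: d_def abs_mult field_simps)
  qed
  have bnd2: "\<bar>d (n + Suc j)\<bar> \<le> 2 / 3^(Suc (n + Suc j))" for n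
    using bnd[of "n + Suc j"] by simp
  have st: "summable (\<lambda>i. \<bar>d (i + Suc j)\<bar>)"
  proof (rule summable_comparison_test)
    show "\<exists>N. \<forall>n\<ge>N. norm \<bar>d (n + Suc j)\<bar> \<le> 2 / 3^(Suc (n + Suc j))"
      using bnd2 by auto
    show "summable (\<lambda>n. 2 / (3::real)^(Suc (n + Suc j)))" by (rule geo_summable)
  qed
  have "\<bar>\<Sum>i. d (i + Suc j)\<bar> \<le> (\<Sum>i. \<bar>d (i + Suc j)\<bar>)"
    by (rule summable_rabs[OF st])
  also have "\<dots> \<le> (\<Sum>i. 2 / (3::real)^(Suc (i + Suc j)))"
    by (intro suminf_le st geo_summable) (use bnd2 in auto)
  also have "\<dots> = 1/3^(Suc j)" by (rule geo_tail)
  finally have t: "\<bar>\<Sum>i. d (i + Suc j)\<bar> \<le> 1/3^(Suc j)" .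
  have dj: "\<bar>d j\<bar> = 2/3^(Suc j)"
  proof -
    have "\<bar>real_of_int (a j - b j)\<bar> = 1" using a[rule_format, of j] b[rule_format, of j] ne by auto
    then show ?thesis by (simp add: d_def abs_mult)
  qed
  show ?thesis using e t dj by linarith
qed

lemma cant_close:
  assumes a: "\<forall>j. a j \<in> {0,1}" and b: "\<forall>j. b j \<in> {0,1}"
    and cl: "\<bar>cant a - cant b\<bar> < 1/3^(Suc N)"
  shows "\<forall>j\<le>N. a j = b j"
proof (rule ccontr)
  assume "\<not> (\<forall>j\<le>N. a j = b j)"
  then obtain j0 where j0: "j0 \<le> N" "a j0 \<noteq> b j0" by auto
  define j where "j = (LEAST j. a j \<noteq> b j)"
  have ne: "a j \<noteq> b j" unfolding j_def by (rule LeastI[of _ j0]) (use j0 in auto)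
  have le: "j \<le> j0" unfolding j_def by (rule Least_le) (use j0 in auto)
  have eq: "\<forall>i<j. a i = b i" unfolding j_def using not_less_Least by blast
  have "1/3^(Suc j) \<le> \<bar>cant a - cant b\<bar>" by (rule cant_sep[OF a b eq ne])
  moreover have "(1::real)/3^(Suc N) \<le> 1/3^(Suc j)"
    using le j0 by (intro divide_left_mono power_increasing) auto
  ultimately show False using cl by linarith
qed

lemma dig_close:
  assumes cl: "\<bar>cant (dig q) - cant (dig q')\<bar> < 1/3^(Suc (2*m))"
    and f1: "\<lfloor>fst q\<rfloor> = \<lfloor>fst q'\<rfloor>" and f2: "\<lfloor>snd q\<rfloor> = \<lfloor>snd q'\<rfloor>"
  shows "\<bar>fst q - fst q'\<bar> < 1/2^m \<and> \<bar>snd q - snd q'\<bar> < 1/2^m"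
proof -
  have all: "\<forall>j\<le>2*m. dig q j = dig q' j"
    by (rule cant_close[OF _ _ cl]) (use dig_01 in blast)+
  have b1: "\<forall>k<m. bitr k (fst q) = bitr k (fst q')"
  proof safe
    fix k assume "k < m"
    then have "dig q (2*k) = dig q' (2*k)" using all by auto
    then show "bitr k (fst q) = bitr k (fst q')" by (simp add: dig_def)
  qed
  have b2: "\<forall>k<m. bitr k (snd q) = bitr k (snd q')"
  proof safe
    fix k assume "k < m"
    then have "dig q (2*k+1) = dig q' (2*k+1)" using all by auto
    then show "bitr k (snd q) = bitr k (snd q')" by (simp add: dig_def)
  qed
  show ?thesis
    using floor_eq_close[OF bits_floor_eq[OF f1 b1]] floor_eq_close[OF bits_floor_eq[OF f2 b2]]
    by simp
qed

definition cd :: "real \<times> real \<Rightarrow> real" where "cd q = cant (dig q)"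
definition D01 :: "(real \<times> real) set" where "D01 = {0..<1} \<times> {0..<1}"
definition sec :: "pt \<Rightarrow> real" where "sec p = cd (psi (fst p), psi (snd p))"
definition phi :: "real \<Rightarrow> real \<times> real" where "phi = inv_into D01 cd"

lemma floor0: "x \<in> {0..<1} \<Longrightarrow> \<lfloor>x::real\<rfloor> = 0"
  by (simp add: floor_eq_iff)

lemma cd_close:
  assumes "q \<in> D01" "q' \<in> D01" "\<bar>cd q - cd q'\<bar> < 1/3^(Suc (2*m))"
  shows "\<bar>fst q - fst q'\<bar> < 1/2^m \<and> \<bar>snd q - snd q'\<bar> < 1/2^m"
  using assms by (intro dig_close) (auto simp: cd_def D01_def floor0 mem_Times_iff)

lemma exists_m: "0 < (e::real) \<Longrightarrow> \<exists>m. 1/2^m < e"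
proof -
  assume "0 < e"
  then obtain m where "(1/2::real)^m < e" using real_arch_pow_inv[of e "1/2"] by auto
  then show ?thesis by (auto simp: power_one_over)
qed

lemma small_all: "(\<forall>m. \<bar>x\<bar> < 1/2^m) \<Longrightarrow> x = (0::real)"
proof (rule ccontr)
  assume a: "\<forall>m. \<bar>x\<bar> < 1/2^m" and "x \<noteq> 0"
  then have "0 < \<bar>x\<bar>" by simp
  then obtain m where "1/2^m < \<bar>x\<bar>" using exists_m by blast
  with a show False by (meson less_asym)
qed

lemma cd_inj: "inj_on cd D01"
proof (rule inj_onI)
  fix q q' assume q: "q \<in> D01" "q' \<in> D01" "cd q = cd q'"
  have "\<forall>m. \<bar>fst q - fst q'\<bar> < 1/2^m \<and> \<bar>snd q - snd q'\<bar> < 1/2^m"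
    using q by (intro allI cd_close) auto
  then have "fst q - fst q' = 0" "snd q - snd q' = 0" using small_all by blast+
  then show "q = q'" by (simp add: prod_eq_iff)
qed

lemma phi_cd: "q \<in> D01 \<Longrightarrow> phi (cd q) = q"
  unfolding phi_def by (rule inv_into_f_f[OF cd_inj])

lemma phi_uc:
  shows "uniformly_continuous_on (cd ` D01) (\<lambda>x. fst (phi x))"
    and "uniformly_continuous_on (cd ` D01) (\<lambda>x. snd (phi x))"
proof -
  have main: "\<exists>d>0. \<forall>x\<in>cd ` D01. \<forall>x'\<in>cd ` D01. dist x' x < d \<longrightarrow>
      dist (fst (phi x')) (fst (phi x)) < e \<and> dist (snd (phi x')) (snd (phi x)) < e"
    if e: "0 < e" for e
  proof -
    obtain m where m: "1/2^m < e" using exists_m[OF e] by blast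
    show ?thesis
    proof (intro exI[of _ "1/3^(Suc (2*m))"] conjI ballI impI)
      show "0 < 1/(3::real)^(Suc (2*m))" by simp
      fix x x' assume x: "x \<in> cd ` D01" and x': "x' \<in> cd ` D01"
        and d: "dist x' x < 1/3^(Suc (2*m))"
      obtain q where q: "q \<in> D01" "x = cd q" using x by blast
      obtain q' where q': "q' \<in> D01" "x' = cd q'" using x' by blast
      have "\<bar>cd q' - cd q\<bar> < 1/3^(Suc (2*m))" using d q q' by (simp add: dist_real_def)
      from cd_close[OF q'(1) q(1) this]
      show "dist (fst (phi x')) (fst (phi x)) < e" "dist (snd (phi x')) (snd (phi x)) < e"
        using q q' m by (auto simp: phi_cd dist_real_def)
    qed
  qed
  show "uniformly_continuous_on (cd ` D01) (\<lambda>x. fst (phi x))"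
    unfolding uniformly_continuous_on_def
  proof (intro allI impI)
    fix e :: real assume "0 < e"
    from main[OF this] obtain d where "d > 0" and d: "\<forall>x\<in>cd ` D01. \<forall>x'\<in>cd ` D01. dist x' x < d \<longrightarrow>
      dist (fst (phi x')) (fst (phi x)) < e \<and> dist (snd (phi x')) (snd (phi x)) < e" by blast
    show "\<exists>d>0. \<forall>x\<in>cd ` D01. \<forall>x'\<in>cd ` D01. dist x' x < d \<longrightarrow> dist (fst (phi x')) (fst (phi x)) < e"
      using \<open>d > 0\<close> d by (intro exI[of _ d]) simp
  qed
  show "uniformly_continuous_on (cd ` D01) (\<lambda>x. snd (phi x))"
    unfolding uniformly_continuous_on_def
  proof (intro allI impI)
    fix e :: real assume "0 < e"
    from main[OF this] obtain d where "d > 0" and d: "\<forall>x\<in>cd ` D01. \<forall>x'\<in>cd ` D01. dist x' x < d \<longrightarrow>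
      dist (fst (phi x')) (fst (phi x)) < e \<and> dist (snd (phi x')) (snd (phi x)) < e" by blast
    show "\<exists>d>0. \<forall>x\<in>cd ` D01. \<forall>x'\<in>cd ` D01. dist x' x < d \<longrightarrow> dist (snd (phi x')) (snd (phi x)) < e"
      using \<open>d > 0\<close> d by (intro exI[of _ d]) simp
  qed
qed

lemma uc_extend:
  fixes f :: "real \<Rightarrow> real"
  assumes "uniformly_continuous_on S f"
  shows "\<exists>h. continuous_on UNIV h \<and> (\<forall>x\<in>S. h x = f x)"
proof -
  from uniformly_continuous_on_extension_on_closure[OF assms]
  obtain g where g1: "uniformly_continuous_on (closure S) g" and g2: "\<And>x. x \<in> S \<Longrightarrow> f x = g x"
    by metis
  have cg: "continuous_on (closure S) g" using g1 by (rule uniformly_continuous_imp_continuous)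
  have cl: "closedin (top_of_set UNIV) (closure S)" by simp
  obtain h where h1: "continuous_on UNIV h" and h3: "\<And>x. x \<in> closure S \<Longrightarrow> h x = g x"
    using Dugundji[OF convex_UNIV UNIV_not_empty cl cg subset_UNIV] by metis
  have "\<forall>x\<in>S. h x = f x" using h3 g2 closure_subset by (metis subsetD)
  then show ?thesis using h1 by blast
qed

lemma psi_D01: "(psi a, psi b) \<in> D01"
  using psi_range[of a] psi_range[of b] by (simp add: D01_def)

lemma G_exists: "\<exists>G::real \<Rightarrow> pt. continuous_on UNIV G \<and> (\<forall>p. G (sec p) = p)"
proof -
  obtain h1 where h1: "continuous_on UNIV h1" "\<forall>x\<in>cd ` D01. h1 x = fst (phi x)"
    using uc_extend[OF phi_uc(1)] by blast
  obtain h2 where h2: "continuous_on UNIV h2" "\<forall>x\<in>cd ` D01. h2 x = snd (phi x)"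
    using uc_extend[OF phi_uc(2)] by blast
  define G where "G x = (psinv (h1 x), psinv (h2 x))" for x
  have "continuous_on UNIV G" unfolding G_def
    by (intro continuous_on_Pair continuous_on_compose2[OF psinv_cont] h1(1) h2(1)) auto
  moreover have "G (sec p) = p" for p
  proof -
    have m: "sec p \<in> cd ` D01" unfolding sec_def using psi_D01 by blast
    have "phi (sec p) = (psi (fst p), psi (snd p))" unfolding sec_def using psi_D01 by (rule phi_cd)
    moreover have "h1 (sec p) = fst (phi (sec p))" "h2 (sec p) = snd (phi (sec p))"
      using h1(2) h2(2) m by blast+
    ultimately show ?thesis by (simp add: G_def psinv_psi)
  qed
  ultimately show ?thesis by blast
qed

lemma dig_real_meas[measurable]: "(\<lambda>q. real_of_int (dig q j)) \<in> borel_measurable borel"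
proof -
  have f: "fst \<in> borel_measurable (borel :: (real \<times> real) measure)"
    by (rule borel_measurable_continuous_onI) (intro continuous_intros)
  have s: "snd \<in> borel_measurable (borel :: (real \<times> real) measure)"
    by (rule borel_measurable_continuous_onI) (intro continuous_intros)
  show ?thesis
    by (cases "even j") (simp_all add: dig_def measurable_compose[OF f bitr_meas] measurable_compose[OF s bitr_meas])
qed

lemma cd_meas[measurable]: "cd \<in> borel_measurable borel"
proof (rule borel_measurable_LIMSEQ_real[where u = "\<lambda>n q. \<Sum>j<n. 2 * real_of_int (dig q j) / 3^(Suc j)"])
  show "\<And>x. x\<in>space borel \<Longrightarrow> (\<lambda>n. \<Sum>j<n. 2 * real_of_int (dig x j) / 3 ^ Suc j) \<longlonglongrightarrow> cd x"
    unfolding cd_def cant_def using cant_summable dig_01 by (auto intro!: summable_LIMSEQ)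
  show "\<And>n. (\<lambda>q. \<Sum>j<n. 2 * real_of_int (dig q j) / 3 ^ Suc j) \<in> borel_measurable borel"
    by measurable
qed

lemma psi_meas'[measurable]: "psi \<in> borel_measurable borel" by (rule psi_meas)

lemma sec_meas[measurable]: "sec \<in> borel_measurable borel"
proof -
  have "(\<lambda>p::pt. (psi (fst p), psi (snd p))) \<in> borel \<Otimes>\<^sub>M borel \<rightarrow>\<^sub>M borel \<Otimes>\<^sub>M borel"
    by measurable
  then have "(\<lambda>p::pt. (psi (fst p), psi (snd p))) \<in> borel \<rightarrow>\<^sub>M borel"
    by (simp add: borel_prod)
  then show ?thesis unfolding sec_def by measurable
qed

lemma sec_range: "sec p \<in> {0..1}"
  using cant_range[of "dig (psi (fst p), psi (snd p))"] dig_01 by (simp add: sec_def cd_def)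

definition clp :: "real \<Rightarrow> real" where "clp x = max 0 (min 1 x)"

lemma clp_cont: "continuous_on UNIV clp"
  unfolding clp_def by (intro continuous_intros)

lemma clp_range: "clp x \<in> {0..1}"
  by (simp add: clp_def)

lemma clp_id: "x \<in> {0..1} \<Longrightarrow> clp x = x"
  by (simp add: clp_def)

lemma clp_meas[measurable]: "clp \<in> borel_measurable borel"
  by (rule borel_measurable_continuous_onI[OF clp_cont])

definition K1 :: "real \<Rightarrow> real measure set" where
  "K1 C = {\<nu>. sets \<nu> = sets borel \<and> emeasure \<nu> UNIV \<le> ennreal C \<and> emeasure \<nu> (UNIV - {0..1}) = 0}"

lemma K1_space: "\<nu> \<in> K1 C \<Longrightarrow> space \<nu> = UNIV"
  unfolding K1_def by (auto dest: sets_eq_imp_space_eq)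

lemma K1_finite: assumes "\<nu> \<in> K1 C" shows "finite_measure \<nu>"
proof (rule finite_measureI)
  show "emeasure \<nu> (space \<nu>) \<noteq> \<infinity>" using assms K1_space[OF assms]
    by (auto simp: K1_def top_unique)
qed

lemma K1_AE: assumes "\<nu> \<in> K1 C" shows "AE x in \<nu>. x \<in> {0..1}"
proof (rule AE_I')
  show "UNIV - {0..1} \<in> null_sets \<nu>" using assms by (auto simp: K1_def null_sets_def)
qed auto

lemma K1_measure_le: assumes "\<nu> \<in> K1 C" "0 \<le> C" shows "measure \<nu> UNIV \<le> C"
  using assms unfolding measure_def K1_def by (auto intro: enn2real_leI)

lemma K1_meas_sets[measurable_cong]: "\<nu> \<in> K1 C \<Longrightarrow> sets \<nu> = sets borel"
  unfolding K1_def by auto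

lemma int_close:
  fixes g h :: "real \<Rightarrow> real"
  assumes \<nu>: "\<nu> \<in> K1 C" and C: "0 \<le> C"
    and gm: "g \<in> borel_measurable borel" and hm: "h \<in> borel_measurable borel"
    and gb: "\<And>x. \<bar>g x\<bar> \<le> Bg" and hb: "\<And>x. \<bar>h x\<bar> \<le> Bh"
    and cl: "\<And>x. x \<in> {0..1} \<Longrightarrow> \<bar>g x - h x\<bar> \<le> \<delta>" and d0: "0 \<le> \<delta>"
  shows "\<bar>(\<integral>x. g x \<partial>\<nu>) - (\<integral>x. h x \<partial>\<nu>)\<bar> \<le> \<delta> * C"
proof -
  interpret finite_measure \<nu> by (rule K1_finite[OF \<nu>])
  have sets: "sets \<nu> = sets borel" using \<nu> by (simp add: K1_def)
  have gm': "g \<in> borel_measurable \<nu>" using gm by (simp add: measurable_cong_sets[OF sets refl])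
  have hm': "h \<in> borel_measurable \<nu>" using hm by (simp add: measurable_cong_sets[OF sets refl])
  have ig: "integrable \<nu> g" using gb gm' by (intro integrable_const_bound[where B=Bg]) auto
  have ih: "integrable \<nu> h" using hb hm' by (intro integrable_const_bound[where B=Bh]) auto
  have ae: "AE x in \<nu>. \<bar>g x - h x\<bar> \<le> \<delta>" using K1_AE[OF \<nu>] cl by auto
  have "\<bar>(\<integral>x. g x \<partial>\<nu>) - (\<integral>x. h x \<partial>\<nu>)\<bar> = \<bar>\<integral>x. g x - h x \<partial>\<nu>\<bar>"
    using ig ih by simp
  also have "\<dots> \<le> (\<integral>x. \<bar>g x - h x\<bar> \<partial>\<nu>)"
    using integral_norm_bound[of \<nu> "\<lambda>x. g x - h x"] by simp
  also have "\<dots> \<le> (\<integral>x. \<delta> \<partial>\<nu>)"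
    using ig ih ae by (intro integral_mono_AE) auto
  also have "\<dots> = \<delta> * measure \<nu> UNIV"
    using K1_space[OF \<nu>] by simp
  also have "\<dots> \<le> \<delta> * C"
    using K1_measure_le[OF \<nu> C] d0 by (intro mult_left_mono) auto
  finally show ?thesis .
qed

definition bp :: "nat \<times> rat list \<Rightarrow> real \<Rightarrow> real" where
  "bp i x = (\<Sum>k\<le>fst i. real_of_rat (snd i ! k) * Bernstein (fst i) k (clp x))"

lemma bp_cont: "continuous_on UNIV (bp i)"
  unfolding bp_def Bernstein_def
  by (intro continuous_intros continuous_on_compose2[OF _ clp_cont]) auto

lemma bp_meas[measurable]: "bp i \<in> borel_measurable borel"
  by (rule borel_measurable_continuous_onI[OF bp_cont])

lemma bp_bound: "\<exists>B. \<forall>x. \<bar>bp i x\<bar> \<le> B"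
proof -
  define p where "p y = (\<Sum>k\<le>fst i. real_of_rat (snd i ! k) * Bernstein (fst i) k y)" for y
  have "continuous_on {0..1} p" unfolding p_def Bernstein_def by (intro continuous_intros)
  then have "compact (p ` {0..1})" by (rule compact_continuous_image) simp
  then obtain B where B: "\<forall>y\<in>p ` {0..1}. norm y \<le> B" using compact_imp_bounded bounded_iff by metis
  have "\<bar>bp i x\<bar> \<le> B" for x
    using B clp_range[of x] by (auto simp: bp_def p_def[symmetric])
  then show ?thesis by blast
qed

lemma rat_approx: "0 < d \<Longrightarrow> \<exists>q. \<bar>real_of_rat q - y\<bar> < d"
proof -
  assume "0 < d"
  then obtain r where r: "r \<in> \<rat>" "y - d < r" "r < y + d"
    using Rats_dense_in_real[of "y - d" "y + d"] by auto
  then obtain q where "r = real_of_rat q" by (auto elim: Rats_cases)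
  then show ?thesis using r by (intro exI[of _ q]) auto
qed

lemma bp_approx:
  assumes g: "continuous_on {0..1} g" and e: "0 < e"
  shows "\<exists>i. \<forall>x\<in>{0..1}. \<bar>g x - bp i x\<bar> < e"
proof -
  obtain N where N: "\<And>n x. N \<le> n \<and> x \<in> {0..1} \<Longrightarrow> \<bar>g x - (\<Sum>k\<le>n. g (k/n) * Bernstein n k x)\<bar> < e/2"
    using Bernstein_Weierstrass[OF g, of "e/2"] e by auto
  define qf where "qf k = (SOME q. \<bar>real_of_rat q - g (k/N)\<bar> < e/2)" for k :: nat
  have qf: "\<bar>real_of_rat (qf k) - g (k/N)\<bar> < e/2" for k
    unfolding qf_def by (rule someI_ex) (rule rat_approx, use e in simp)
  define i where "i = (N, map qf [0..<Suc N])"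
  have "\<bar>g x - bp i x\<bar> < e" if x: "x \<in> {0..1}" for x
  proof -
    have bpx: "bp i x = (\<Sum>k\<le>N. real_of_rat (qf k) * Bernstein N k x)"
      unfolding bp_def i_def using x by (auto simp: clp_id nth_map intro!: sum.cong simp del: upt_Suc)
    have "\<bar>(\<Sum>k\<le>N. g (k/N) * Bernstein N k x) - bp i x\<bar>
          = \<bar>\<Sum>k\<le>N. (g (k/N) - real_of_rat (qf k)) * Bernstein N k x\<bar>"
      unfolding bpx by (simp add: sum_subtractf left_diff_distrib)
    also have "\<dots> \<le> (\<Sum>k\<le>N. \<bar>(g (k/N) - real_of_rat (qf k)) * Bernstein N k x\<bar>)"
      by (rule sum_abs)
    also have "\<dots> \<le> (\<Sum>k\<le>N. e/2 * Bernstein N k x)"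
    proof (rule sum_mono)
      fix k assume "k \<in> {..N}"
      have b: "0 \<le> Bernstein N k x" using x by (simp add: Bernstein_nonneg)
      have "\<bar>g (k/N) - real_of_rat (qf k)\<bar> \<le> e/2" using qf[of k] by (simp add: abs_minus_commute)
      then have "\<bar>g (k/N) - real_of_rat (qf k)\<bar> * Bernstein N k x \<le> e/2 * Bernstein N k x"
        by (rule mult_right_mono[OF _ b])
      then show "\<bar>(g (k/N) - real_of_rat (qf k)) * Bernstein N k x\<bar> \<le> e/2 * Bernstein N k x"
        using b by (simp add: abs_mult)
    qed
    also have "\<dots> = e/2 * (\<Sum>k\<le>N. Bernstein N k x)" by (rule sum_distrib_left[symmetric])
    also have "\<dots> = e/2" by simp
    finally have "\<bar>(\<Sum>k\<le>N. g (k/N) * Bernstein N k x) - bp i x\<bar> \<le> e/2" .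
    moreover have "\<bar>g x - (\<Sum>k\<le>N. g (k/N) * Bernstein N k x)\<bar> < e/2" using N[of N x] x by simp
    ultimately show ?thesis by linarith
  qed
  then show ?thesis by blast
qed

lemma K1_AE_gen: "sets M = sets borel \<Longrightarrow> emeasure M (UNIV - {0..1}) = 0 \<Longrightarrow> AE x in M. x \<in> ({0..1}::real set)"
  by (rule AE_I'[of "UNIV - {0..1}"]) (auto simp: null_sets_def)

lemma integral_zero_measure:
  assumes "emeasure M (space M) = 0"
  shows "(\<integral>x. g x \<partial>M) = (0::real)"
proof -
  have "AE x in M. False" using assms AE_iff_measurable[of "space M" M "\<lambda>x. False"] by simp
  then have "AE x in M. g x = 0" by (rule eventually_mono) simp
  then show ?thesis by (rule integral_eq_zero_AE)
qed

lemma seq_compact_K1: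
  fixes \<nu> :: "nat \<Rightarrow> real measure"
  assumes C: "0 \<le> C" and \<nu>: "\<And>n. \<nu> n \<in> K1 C"
  shows "\<exists>r \<nu>0. strict_mono r \<and> \<nu>0 \<in> K1 C \<and>
    (\<forall>g::real\<Rightarrow>real. continuous_on UNIV g \<longrightarrow> (\<exists>B. \<forall>x. \<bar>g x\<bar> \<le> B) \<longrightarrow>
        (\<lambda>n. \<integral>x. g x \<partial>\<nu> (r n)) \<longlonglongrightarrow> (\<integral>x. g x \<partial>\<nu>0))"
proof -
  define c where "c n = measure (\<nu> n) UNIV" for n
  have c_rng: "c n \<in> {0..C}" for n using K1_measure_le[OF \<nu> C] by (simp add: c_def)
  obtain c0 r1 where c0: "c0 \<in> {0..C}" and r1: "strict_mono r1" and cr1: "(c \<circ> r1) \<longlonglongrightarrow> c0"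
    using compact_imp_seq_compact[OF compact_Icc[of 0 C]] c_rng unfolding seq_compact_def by metis
  have sp: "space (\<nu> n) = UNIV" for n using K1_space[OF \<nu>] .
  have em: "emeasure (\<nu> n) UNIV = ennreal (c n)" for n
    using finite_measure.emeasure_eq_measure[OF K1_finite[OF \<nu>], of n UNIV] by (simp add: c_def)
  have sets\<nu>[measurable_cong]: "sets (\<nu> n) = sets borel" for n using K1_meas_sets[OF \<nu>] .
  define P where "P n = (if c n = 0 then return borel 0 else density (\<nu> n) (\<lambda>_. ennreal (1 / c n)))" for n
  have Psets: "sets (P n) = sets borel" for n by (simp add: P_def sets\<nu>)
  have Pspace: "space (P n) = UNIV" for n using Psets[of n] sets_eq_imp_space_eq by fastforce
  have Pem: "emeasure (P n) A = ennreal (1 / c n) * emeasure (\<nu> n) A" if "c n \<noteq> 0" "A \<in> sets borel" for n A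
  proof -
    have "emeasure (P n) A = (\<integral>\<^sup>+ x. ennreal (1 / c n) * indicator A x \<partial>\<nu> n)"
      using that by (simp add: P_def emeasure_density sets\<nu>)
    also have "\<dots> = ennreal (1 / c n) * emeasure (\<nu> n) A"
      using that by (intro nn_integral_cmult_indicator) (simp add: sets\<nu>)
    finally show ?thesis .
  qed
  have Pprob: "prob_space (P n)" for n
  proof (cases "c n = 0")
    case True then show ?thesis by (simp add: P_def prob_space_return)
  next
    case False
    have cpos: "c n > 0" using c_rng[of n] False by auto
    show ?thesis
    proof (rule prob_spaceI)
      have "emeasure (P n) (space (P n)) = ennreal (1 / c n) * ennreal (c n)"
        using Pem[OF False, of UNIV] by (simp add: Pspace em)
      also have "\<dots> = ennreal (1 / c n * c n)" using cpos by (subst ennreal_mult[symmetric]) auto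
      also have "\<dots> = 1" using cpos by simp
      finally show "emeasure (P n) (space (P n)) = 1" .
    qed
  qed
  have Prd: "real_distribution (P n)" for n
    unfolding real_distribution_def real_distribution_axioms_def using Pprob Psets by auto
  have Psupp: "emeasure (P n) (UNIV - {0..1}) = 0" for n
  proof (cases "c n = 0")
    case True then show ?thesis by (simp add: P_def emeasure_return)
  next
    case False
    then show ?thesis using Pem[OF False, of "UNIV - {0..1}"] \<nu>[of n] by (simp add: K1_def)
  qed
  have PAE: "AE x in P n. x \<in> {0..1}" for n by (rule K1_AE_gen[OF Psets Psupp])
  have intP: "(\<integral>x. g x \<partial>\<nu> n) = c n * (\<integral>x. g x \<partial>P n)" if gm: "g \<in> borel_measurable borel" for g :: "real \<Rightarrow> real" and n
  proof (cases "c n = 0")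
    case True
    then have "emeasure (\<nu> n) (space (\<nu> n)) = 0" using em[of n] by (simp add: sp)
    then show ?thesis using True by (simp add: integral_zero_measure)
  next
    case False
    have "(\<integral>x. g x \<partial>P n) = (\<integral>x. (1 / c n) *\<^sub>R g x \<partial>\<nu> n)"
      unfolding P_def using False by (simp only: if_False) (intro integral_density, auto simp: c_def measurable_cong_sets[OF sets\<nu> refl] gm)
    then show ?thesis using False by simp
  qed
  have tight: "tight P"
    unfolding tight_def
  proof (intro conjI allI impI)
    show "real_distribution (P n)" for n by (rule Prd)
    fix \<epsilon> :: real assume "0 < \<epsilon>"
    have "measure (P n) {-1<..2} = 1" for n
    proof -
      interpret prob_space "P n" by (rule Pprob)
      have "AE x in P n. x \<in> {-1<..2::real}" using PAE[of n] by (rule eventually_mono) auto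
      then show ?thesis by (subst (asm) AE_in_set_eq_1) (auto simp: Psets)
    qed
    then show "\<exists>a b. a < b \<and> (\<forall>n. 1 - \<epsilon> < measure (P n) {a<..b})"
      using \<open>0 < \<epsilon>\<close> by (intro exI[of _ "-1"] exI[of _ 2]) auto
  qed
  obtain r2 M where r2: "strict_mono r2" and M: "real_distribution M" and wc: "weak_conv_m (P \<circ> r1 \<circ> r2) M"
    using tight_imp_convergent_subsubsequence[OF tight r1] by blast
  interpret M: real_distribution M by (rule M)
  define r where "r = r1 \<circ> r2"
  define \<nu>0 where "\<nu>0 = density (distr M borel clp) (\<lambda>_. ennreal c0)"
  have sets0: "sets \<nu>0 = sets borel" by (simp add: \<nu>0_def)
  have clpM: "clp \<in> measurable M borel" by (simp add: measurable_cong_sets[OF M.events_eq_borel refl])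
  have em0: "emeasure \<nu>0 A = ennreal c0 * emeasure M (clp -` A)" if "A \<in> sets borel" for A
  proof -
    have "emeasure \<nu>0 A = ennreal c0 * emeasure (distr M borel clp) A"
      unfolding \<nu>0_def using that by (simp add: emeasure_density nn_integral_cmult_indicator)
    also have "emeasure (distr M borel clp) A = emeasure M (clp -` A)"
      using that clpM by (simp add: emeasure_distr M.space_eq_univ)
    finally show ?thesis .
  qed
  have inK: "\<nu>0 \<in> K1 C"
  proof -
    have "emeasure \<nu>0 UNIV = ennreal c0" using em0[of UNIV] M.emeasure_space_1 by (simp add: M.space_eq_univ)
    moreover have "ennreal c0 \<le> ennreal C" using c0 by simp
    moreover have "clp -` (UNIV - {0..1}) = {}" using clp_range by auto
    ultimately show ?thesis using em0[of "UNIV - {0..1}"] sets0 by (simp add: K1_def)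
  qed
  have smr: "strict_mono r" unfolding r_def using r1 r2 by (rule strict_mono_o)
  have conv: "(\<lambda>n. \<integral>x. g x \<partial>\<nu> (r n)) \<longlonglongrightarrow> (\<integral>x. g x \<partial>\<nu>0)"
    if gc: "continuous_on UNIV g" and gb: "\<exists>B. \<forall>x. \<bar>g x\<bar> \<le> B" for g :: "real \<Rightarrow> real"
  proof -
    obtain B where B: "\<And>x. \<bar>g x\<bar> \<le> B" using gb by blast
    have gm: "g \<in> borel_measurable borel" by (rule borel_measurable_continuous_onI[OF gc])
    define h where "h x = g (clp x)" for x
    have hc: "isCont h x" for x
    proof -
      have "continuous_on UNIV h" unfolding h_def by (rule continuous_on_compose2[OF gc clp_cont]) auto
      then show ?thesis by (simp add: continuous_on_eq_continuous_at)
    qed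
    have hb: "norm (h x) \<le> B" for x using B by (simp add: h_def)
    have Prd': "real_distribution ((P \<circ> r1 \<circ> r2) n)" for n by (simp add: Prd)
    have conv: "(\<lambda>n. \<integral>x. h x \<partial>(P \<circ> r1 \<circ> r2) n) \<longlonglongrightarrow> (\<integral>x. h x \<partial>M)"
      by (rule weak_conv_imp_integral_bdd_continuous_conv[OF Prd' M wc hc hb])
    have hP: "(\<integral>x. g x \<partial>P n) = (\<integral>x. h x \<partial>P n)" for n
      by (rule integral_cong_AE) (auto simp: h_def clp_id measurable_cong_sets[OF Psets refl] gm measurable_compose[OF clp_meas gm] intro: eventually_mono[OF PAE[of n]])
    have "(\<lambda>n. c (r n)) \<longlonglongrightarrow> c0"
      using LIMSEQ_subseq_LIMSEQ[OF cr1 r2] by (simp add: r_def comp_def)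
    then have "(\<lambda>n. c (r n) * (\<integral>x. h x \<partial>P (r n))) \<longlonglongrightarrow> c0 * (\<integral>x. h x \<partial>M)"
      using conv by (intro tendsto_mult) (auto simp: r_def comp_def)
    moreover have "(\<integral>x. g x \<partial>\<nu> (r n)) = c (r n) * (\<integral>x. h x \<partial>P (r n))" for n
      using intP[OF gm] hP by simp
    moreover have "(\<integral>x. g x \<partial>\<nu>0) = c0 * (\<integral>x. h x \<partial>M)"
    proof -
      have "(\<integral>x. g x \<partial>\<nu>0) = (\<integral>x. c0 *\<^sub>R g x \<partial>distr M borel clp)"
        unfolding \<nu>0_def using c0 gm by (intro integral_density) auto
      also have "\<dots> = c0 * (\<integral>x. g x \<partial>distr M borel clp)" by simp
      also have "(\<integral>x. g x \<partial>distr M borel clp) = (\<integral>x. h x \<partial>M)"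
        unfolding h_def by (rule integral_distr[OF clpM gm])
      finally show ?thesis .
    qed
    ultimately show ?thesis by simp
  qed
  show ?thesis
  proof (intro exI[of _ r] exI[of _ \<nu>0] conjI allI impI)
    show "strict_mono r" by (rule smr)
    show "\<nu>0 \<in> K1 C" by (rule inK)
    fix g :: "real \<Rightarrow> real" assume "continuous_on UNIV g" "\<exists>B. \<forall>x. \<bar>g x\<bar> \<le> B"
    then show "(\<lambda>n. \<integral>x. g x \<partial>\<nu> (r n)) \<longlonglongrightarrow> (\<integral>x. g x \<partial>\<nu>0)" by (rule conv)
  qed
qed

definition Bset :: "real \<Rightarrow> ((nat \<times> rat list) \<times> rat \<times> rat) list \<Rightarrow> real measure set" where
  "Bset C L = {\<nu> \<in> K1 C. \<forall>(i,a,b) \<in> set L. real_of_rat a < (\<integral>x. bp i x \<partial>\<nu>) \<and> (\<integral>x. bp i x \<partial>\<nu>) < real_of_rat b}"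

lemma Bset_append: "Bset C (L1 @ L2) = Bset C L1 \<inter> Bset C L2"
  unfolding Bset_def set_append ball_Un by blast

abbreviation sb :: "pt measure set set" where
  "sb \<equiv> {{M \<in> M1. (\<integral>p. f p \<partial>M) \<in> U} | f U. bcont f \<and> open U}"

lemma weak_top_eq: "weak_top = topology_generated_by sb"
  by (simp add: weak_top_def)

lemma push_meas:
  assumes G: "continuous_on UNIV (G :: real \<Rightarrow> pt)" and \<nu>: "\<nu> \<in> K1 C"
  shows "G \<in> measurable \<nu> borel"
  using borel_measurable_continuous_onI[OF G] by (simp add: measurable_cong_sets[OF K1_meas_sets[OF \<nu>] refl])

lemma push_M1:
  assumes G: "continuous_on UNIV (G :: real \<Rightarrow> pt)" and \<nu>: "\<nu> \<in> K1 C"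
  shows "distr \<nu> borel G \<in> M1"
proof -
  have "emeasure (distr \<nu> borel G) (space (distr \<nu> borel G)) = emeasure \<nu> UNIV"
    using push_meas[OF G \<nu>] K1_space[OF \<nu>] by (simp add: emeasure_distr)
  also have "\<dots> < \<infinity>" using \<nu> unfolding K1_def by (auto intro: le_less_trans[OF _ ennreal_less_top])
  finally show ?thesis by (simp add: M1_def)
qed

lemma push_int:
  assumes G: "continuous_on UNIV (G :: real \<Rightarrow> pt)" and \<nu>: "\<nu> \<in> K1 C" and f: "continuous_on UNIV f"
  shows "(\<integral>p. f p \<partial>distr \<nu> borel G) = (\<integral>x. (f (G x) :: real) \<partial>\<nu>)"
  by (rule integral_distr[OF push_meas[OF G \<nu>] borel_measurable_continuous_onI[OF f]])

lemma rat_between: "x < (y::real) \<Longrightarrow> \<exists>q. x < real_of_rat q \<and> real_of_rat q < y"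
proof -
  assume "x < y"
  then obtain r where r: "r \<in> \<rat>" "x < r" "r < y" using Rats_dense_in_real by blast
  then obtain q where "r = real_of_rat q" by (auto elim: Rats_cases)
  then show ?thesis using r by blast
qed

lemma open_base:
  assumes G: "continuous_on UNIV (G :: real \<Rightarrow> pt)" and C: "0 \<le> C"
    and U: "generate_topology_on sb U"
  shows "\<And>\<nu>. \<nu> \<in> K1 C \<Longrightarrow> distr \<nu> borel G \<in> U \<Longrightarrow>
           \<exists>L. \<nu> \<in> Bset C L \<and> (\<forall>\<nu>'\<in>Bset C L. distr \<nu>' borel G \<in> U)"
  using U
proof (induction)
  case Empty
  then show ?case by simp
next
  case (Int a b)
  obtain L1 where L1: "\<nu> \<in> Bset C L1" "\<forall>\<nu>'\<in>Bset C L1. distr \<nu>' borel G \<in> a" using Int by blast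
  obtain L2 where L2: "\<nu> \<in> Bset C L2" "\<forall>\<nu>'\<in>Bset C L2. distr \<nu>' borel G \<in> b" using Int by blast
  show ?case using L1 L2 by (intro exI[of _ "L1 @ L2"]) (auto simp: Bset_append)
next
  case (UN K)
  then obtain k where k: "k \<in> K" "distr \<nu> borel G \<in> k" by blast
  then obtain L where "\<nu> \<in> Bset C L" "\<forall>\<nu>'\<in>Bset C L. distr \<nu>' borel G \<in> k" using UN by blast
  then show ?case using k by blast
next
  case (Basis s)
  then obtain f V where s: "s = {M \<in> M1. (\<integral>p. f p \<partial>M) \<in> V}" and f: "bcont f" and V: "open V" by blast
  have fc: "continuous_on UNIV f" using f by (simp add: bcont_def)
  obtain Bf where Bf: "\<And>p. \<bar>f p\<bar> \<le> Bf" using f unfolding bcont_def bounded_iff by auto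
  define g where "g x = f (G x)" for x
  have gc: "continuous_on UNIV g" unfolding g_def by (rule continuous_on_compose2[OF fc G]) auto
  have gm: "g \<in> borel_measurable borel" by (rule borel_measurable_continuous_onI[OF gc])
  have gb: "\<And>x. \<bar>g x\<bar> \<le> Bf" by (simp add: g_def Bf)
  have int: "(\<integral>p. f p \<partial>distr \<nu>' borel G) = (\<integral>x. g x \<partial>\<nu>')" if "\<nu>' \<in> K1 C" for \<nu>'
    unfolding g_def by (rule push_int[OF G that fc])
  define y where "y = (\<integral>x. g x \<partial>\<nu>)"
  have "y \<in> V" using Basis.prems s int by (simp add: y_def)
  then obtain e where e: "e > 0" "ball y e \<subseteq> V" using V by (auto elim: openE)
  define \<delta> where "\<delta> = e / (4 * (C + 1))"
  have \<delta>: "0 < \<delta>" using e C by (simp add: \<delta>_def)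
  have \<delta>C: "\<delta> * C < e / 4" using e C by (simp add: \<delta>_def field_simps)
  obtain i where i: "\<forall>x\<in>{0..1}. \<bar>g x - bp i x\<bar> < \<delta>"
    using bp_approx[OF continuous_on_subset[OF gc subset_UNIV] \<delta>] by blast
  obtain Bi where Bi: "\<And>x. \<bar>bp i x\<bar> \<le> Bi" using bp_bound by blast
  have close: "\<bar>(\<integral>x. g x \<partial>\<nu>') - (\<integral>x. bp i x \<partial>\<nu>')\<bar> < e / 4" if "\<nu>' \<in> K1 C" for \<nu>'
  proof -
    have "\<bar>(\<integral>x. g x \<partial>\<nu>') - (\<integral>x. bp i x \<partial>\<nu>')\<bar> \<le> \<delta> * C"
      using i \<delta> by (intro int_close[OF that C gm bp_meas gb Bi]) (auto intro!: less_imp_le)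
    then show ?thesis using \<delta>C by linarith
  qed
  define z where "z = (\<integral>x. bp i x \<partial>\<nu>)"
  obtain a where a: "z - e/4 < real_of_rat a" "real_of_rat a < z" using rat_between[of "z - e/4" z] e by auto
  obtain b where b: "z < real_of_rat b" "real_of_rat b < z + e/4" using rat_between[of z "z + e/4"] e by auto
  define L where "L = [(i, a, b)]"
  have "\<nu> \<in> Bset C L" using Basis.prems a b by (simp add: Bset_def L_def z_def)
  moreover have "distr \<nu>' borel G \<in> s" if \<nu>': "\<nu>' \<in> Bset C L" for \<nu>'
  proof -
    have K: "\<nu>' \<in> K1 C" using \<nu>' by (simp add: Bset_def)
    have w: "real_of_rat a < (\<integral>x. bp i x \<partial>\<nu>')" "(\<integral>x. bp i x \<partial>\<nu>') < real_of_rat b"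
      using \<nu>' by (auto simp: Bset_def L_def)
    have c1: "\<bar>(\<integral>x. g x \<partial>\<nu>') - (\<integral>x. bp i x \<partial>\<nu>')\<bar> < e / 4" by (rule close[OF K])
    have c2: "\<bar>z - y\<bar> < e / 4" using close[OF Basis.prems(1)] by (simp add: y_def z_def abs_minus_commute)
    have "dist y (\<integral>x. g x \<partial>\<nu>') < e" using c1 c2 w a b unfolding dist_real_def abs_less_iff by linarith
    then have "(\<integral>p. f p \<partial>distr \<nu>' borel G) \<in> V" using e int[OF K] by auto
    then show ?thesis using push_M1[OF G K] s by simp
  qed
  ultimately show ?case by blast
qed

lemma compact_push:
  assumes G: "continuous_on UNIV (G :: real \<Rightarrow> pt)" and C: "0 \<le> C"
  shows "compactin weak_top ((\<lambda>\<nu>. distr \<nu> borel G) ` K1 C)"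
  unfolding compactin_def
proof (intro conjI allI impI)
  have "M1 \<subseteq> \<Union>sb"
  proof
    fix M assume "M \<in> M1"
    moreover have "bcont (\<lambda>_. 0)" by (simp add: bcont_def)
    ultimately have "M \<in> {M \<in> M1. (\<integral>p. 0 \<partial>M) \<in> (UNIV::real set)}" by simp
    then show "M \<in> \<Union>sb" using \<open>bcont (\<lambda>_. 0)\<close> by blast
  qed
  then show "(\<lambda>\<nu>. distr \<nu> borel G) ` K1 C \<subseteq> topspace weak_top"
    using push_M1[OF G] by (auto simp: weak_top_eq)
  fix \<U> assume U: "(\<forall>U\<in>\<U>. openin weak_top U) \<and> (\<lambda>\<nu>. distr \<nu> borel G) ` K1 C \<subseteq> \<Union>\<U>"
  show "\<exists>\<F>. finite \<F> \<and> \<F> \<subseteq> \<U> \<and> (\<lambda>\<nu>. distr \<nu> borel G) ` K1 C \<subseteq> \<Union>\<F>"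
  proof (rule ccontr)
    assume nf: "\<not> (\<exists>\<F>. finite \<F> \<and> \<F> \<subseteq> \<U> \<and> (\<lambda>\<nu>. distr \<nu> borel G) ` K1 C \<subseteq> \<Union>\<F>)"
    define V where "V = {L. \<exists>U\<in>\<U>. \<forall>\<nu>'\<in>Bset C L. distr \<nu>' borel G \<in> U}"
    have cov: "\<exists>L\<in>V. \<nu> \<in> Bset C L" if \<nu>: "\<nu> \<in> K1 C" for \<nu>
    proof -
      obtain U0 where U0: "U0 \<in> \<U>" "distr \<nu> borel G \<in> U0" using U \<nu> by blast
      then have "generate_topology_on sb U0" using U by (simp add: weak_top_eq openin_topology_generated_by_iff)
      from open_base[OF G C this \<nu> U0(2)] obtain L where
        "\<nu> \<in> Bset C L" "\<forall>\<nu>'\<in>Bset C L. distr \<nu>' borel G \<in> U0" by blast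
      then show ?thesis using U0 by (auto simp: V_def)
    qed
    have "null_measure borel \<in> K1 C" using C by (simp add: K1_def)
    then have Vne: "V \<noteq> {}" using cov by blast
    have Vc: "countable V" by simp
    define e where "e = from_nat_into V"
    have eV: "e n \<in> V" for n unfolding e_def using Vne by (rule from_nat_into)
    have rng: "range e = V" unfolding e_def using Vne Vc by simp
    obtain Uf where Uf: "\<forall>L\<in>V. Uf L \<in> \<U> \<and> (\<forall>\<nu>'\<in>Bset C L. distr \<nu>' borel G \<in> Uf L)"
      using bchoice[of V "\<lambda>L U. U \<in> \<U> \<and> (\<forall>\<nu>'\<in>Bset C L. distr \<nu>' borel G \<in> U)"] by (auto simp: V_def)
    have "\<exists>\<nu>. \<nu> \<in> K1 C \<and> distr \<nu> borel G \<notin> \<Union>(Uf ` e ` {..n})" for n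
    proof (rule ccontr)
      assume "\<not> ?thesis"
      then have "(\<lambda>\<nu>. distr \<nu> borel G) ` K1 C \<subseteq> \<Union>(Uf ` e ` {..n})" by blast
      moreover have "finite (Uf ` e ` {..n})" by simp
      moreover have "Uf ` e ` {..n} \<subseteq> \<U>" using Uf eV by blast
      ultimately show False using nf by blast
    qed
    then obtain \<nu>s where \<nu>s: "\<And>n. \<nu>s n \<in> K1 C" "\<And>n. distr (\<nu>s n) borel G \<notin> \<Union>(Uf ` e ` {..n})"
      by metis
    obtain r \<nu>0 where r: "strict_mono r" and \<nu>0: "\<nu>0 \<in> K1 C"
      and conv: "\<forall>g::real\<Rightarrow>real. continuous_on UNIV g \<longrightarrow> (\<exists>B. \<forall>x. \<bar>g x\<bar> \<le> B) \<longrightarrow>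
        (\<lambda>n. \<integral>x. g x \<partial>\<nu>s (r n)) \<longlonglongrightarrow> (\<integral>x. g x \<partial>\<nu>0)"
      using seq_compact_K1[of C \<nu>s, OF C \<nu>s(1)] by blast
    obtain L where L: "L \<in> V" "\<nu>0 \<in> Bset C L" using cov[OF \<nu>0] by blast
    obtain k where k: "e k = L" using rng L(1) by blast
    have "\<forall>t\<in>set L. eventually (\<lambda>n. real_of_rat (fst (snd t)) < (\<integral>x. bp (fst t) x \<partial>\<nu>s (r n)) \<and>
              (\<integral>x. bp (fst t) x \<partial>\<nu>s (r n)) < real_of_rat (snd (snd t))) sequentially"
    proof
      fix t assume t: "t \<in> set L"
      obtain i a b where tt: "t = (i, a, b)" by (cases t) auto
      have lim: "(\<lambda>n. \<integral>x. bp i x \<partial>\<nu>s (r n)) \<longlonglongrightarrow> (\<integral>x. bp i x \<partial>\<nu>0)"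
        using conv bp_cont bp_bound by blast
      have "real_of_rat a < (\<integral>x. bp i x \<partial>\<nu>0)" "(\<integral>x. bp i x \<partial>\<nu>0) < real_of_rat b"
        using L(2) t tt by (auto simp: Bset_def)
      then show "eventually (\<lambda>n. real_of_rat (fst (snd t)) < (\<integral>x. bp (fst t) x \<partial>\<nu>s (r n)) \<and>
              (\<integral>x. bp (fst t) x \<partial>\<nu>s (r n)) < real_of_rat (snd (snd t))) sequentially"
        using order_tendstoD(1)[OF lim] order_tendstoD(2)[OF lim] tt by (auto intro: eventually_conj)
    qed
    then have "eventually (\<lambda>n. \<forall>t\<in>set L. real_of_rat (fst (snd t)) < (\<integral>x. bp (fst t) x \<partial>\<nu>s (r n)) \<and>
              (\<integral>x. bp (fst t) x \<partial>\<nu>s (r n)) < real_of_rat (snd (snd t))) sequentially"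
      by (intro eventually_ball_finite) auto
    then obtain N where N: "\<And>n. n \<ge> N \<Longrightarrow> \<forall>t\<in>set L. real_of_rat (fst (snd t)) < (\<integral>x. bp (fst t) x \<partial>\<nu>s (r n)) \<and>
              (\<integral>x. bp (fst t) x \<partial>\<nu>s (r n)) < real_of_rat (snd (snd t))"
      unfolding eventually_sequentially by blast
    define n where "n = max N k"
    have "\<nu>s (r n) \<in> Bset C L" using N[of n] \<nu>s(1)[of "r n"] by (auto simp: Bset_def n_def)
    then have "distr (\<nu>s (r n)) borel G \<in> Uf L" using Uf L(1) by blast
    moreover have "k \<le> r n" using seq_suble[OF r, of n] by (simp add: n_def)
    then have "Uf L \<in> Uf ` e ` {..r n}" using k by blast
    ultimately show False using \<nu>s(2)[of "r n"] by blast
  qed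
qed

lemma exists_compact_mass:
  assumes C: "0 \<le> C"
  shows "\<exists>K. compactin weak_top K \<and> {M \<in> M1. emeasure M (space M) \<le> ennreal C} \<subseteq> K"
proof -
  obtain G :: "real \<Rightarrow> pt" where G: "continuous_on UNIV G" and Gs: "\<And>p. G (sec p) = p"
    using G_exists by blast
  have "M \<in> (\<lambda>\<nu>. distr \<nu> borel G) ` K1 C" if M: "M \<in> M1" "emeasure M (space M) \<le> ennreal C" for M
  proof -
    have sM: "sets M = sets borel" using M by (simp add: M1_def)
    have spM: "space M = UNIV" using sets_eq_imp_space_eq[OF sM] by simp
    have secM: "sec \<in> measurable M borel" by (simp add: measurable_cong_sets[OF sM refl])
    define \<nu> where "\<nu> = distr M borel sec"
    have "\<nu> \<in> K1 C"
    proof -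
      have "emeasure \<nu> UNIV = emeasure M (space M)" using secM spM by (simp add: \<nu>_def emeasure_distr)
      moreover have "sec -` (UNIV - {0..1}) = {}" using sec_range by auto
      ultimately show ?thesis using M(2) secM spM by (simp add: K1_def \<nu>_def emeasure_distr)
    qed
    moreover have "distr \<nu> borel G = M"
    proof -
      have "distr \<nu> borel G = distr M borel (G \<circ> sec)" unfolding \<nu>_def
        by (rule distr_distr[OF borel_measurable_continuous_onI[OF G] secM])
      also have "G \<circ> sec = (\<lambda>x. x)" using Gs by auto
      also have "distr M borel (\<lambda>x. x) = M" by (rule distr_id2[OF sM[symmetric]])
      finally show ?thesis .
    qed
    ultimately show ?thesis by blast
  qed
  then show ?thesis using compact_push[OF G C] by blast
qed

definition posp :: "pt \<Rightarrow> bool" where "posp p \<longleftrightarrow> 0 < fst p \<and> 0 < snd p"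

definition cnt :: "pt set \<Rightarrow> pt list \<Rightarrow> nat" where
  "cnt A ps = length (filter (\<lambda>p. p \<in> A \<and> 0 < fst p \<and> 0 < snd p) ps)"

lemma cnt_Cons: "cnt A (p # ps) = (if p \<in> A \<and> posp p then 1 else 0) + cnt A ps"
  by (auto simp: cnt_def posp_def)

lemma ofnat_if: "(of_nat (if b then 1 else 0) :: ennreal) = (if b then 1 else 0)"
  by simp

lemma cnt_countably_additive:
  assumes "disjoint_family A"
  shows "(\<Sum>i. of_nat (cnt (A i) ps) :: ennreal) = of_nat (cnt (\<Union>i. A i) ps)"
proof (induction ps)
  case Nil
  then show ?case by (simp add: cnt_def)
next
  case (Cons p ps)
  have single: "(\<Sum>i. (if p \<in> A i \<and> posp p then 1 else 0) :: ennreal) = (if p \<in> (\<Union>i. A i) \<and> posp p then 1 else 0)"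
  proof (cases "posp p")
    case True
    then show ?thesis using suminf_indicator[OF assms, of p] by (simp add: indicator_def of_bool_def)
  next
    case False
    then show ?thesis by simp
  qed
  have "(\<Sum>i. of_nat (cnt (A i) (p # ps)) :: ennreal)
      = (\<Sum>i. (if p \<in> A i \<and> posp p then 1 else 0) + (of_nat (cnt (A i) ps) :: ennreal))"
    by (simp add: cnt_Cons of_nat_add ofnat_if)
  also have "\<dots> = (\<Sum>i. (if p \<in> A i \<and> posp p then 1 else 0) :: ennreal) + (\<Sum>i. of_nat (cnt (A i) ps) :: ennreal)"
    by (rule suminf_add[symmetric]) (auto intro: summableI)
  also have "\<dots> = of_nat (cnt (\<Union>i. A i) (p # ps))"
    unfolding single Cons by (simp add: cnt_Cons of_nat_add ofnat_if)
  finally show ?case .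
qed

lemma ptmeas_sets: "sets (ptmeas c ps) = sets borel"
proof -
  have "sets (ptmeas c ps) = sigma_sets UNIV (sets borel)"
    unfolding ptmeas_def by (rule sets_measure_of) simp
  also have "\<dots> = sets borel" using sets.sigma_sets_eq[of borel] by simp
  finally show ?thesis .
qed

lemma ptmeas_emeasure:
  assumes "A \<in> sets borel"
  shows "emeasure (ptmeas c ps) A = ennreal c * of_nat (cnt A ps)"
proof -
  have "emeasure (measure_of (space borel) (sets borel) (\<lambda>A. ennreal c * of_nat (cnt A ps))) A
        = ennreal c * of_nat (cnt A ps)"
  proof (rule emeasure_measure_of_sigma)
    show "sigma_algebra (space borel) (sets (borel :: pt measure))" by (rule sets.sigma_algebra_axioms)
    show "positive (sets borel) (\<lambda>A. ennreal c * of_nat (cnt A ps))"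
      by (simp add: positive_def cnt_def)
    show "countably_additive (sets borel) (\<lambda>A. ennreal c * of_nat (cnt A ps))"
      unfolding countably_additive_def using cnt_countably_additive by simp
  qed fact
  moreover have "ptmeas c ps = measure_of (space borel) (sets borel) (\<lambda>A. ennreal c * of_nat (cnt A ps))"
    unfolding ptmeas_def cnt_def space_borel by (rule refl)
  ultimately show ?thesis by simp
qed

lemma job_pts_length: "length (job_pts z0 B0 D0 xi B D S t) = z0 + arr_count xi t"
  by (simp add: job_pts_def)

lemma cnt_le_length: "cnt A ps \<le> length ps"
  unfolding cnt_def by (rule length_filter_le)

lemma rescale_map_meas: "(\<lambda>(x, y). (x, y / ennreal r)) \<in> (borel :: pt measure) \<rightarrow>\<^sub>M (borel :: pt measure)"
proof -
  have "(\<lambda>p::pt. (fst p, snd p / ennreal r)) \<in> borel \<Otimes>\<^sub>M borel \<rightarrow>\<^sub>M borel \<Otimes>\<^sub>M borel"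
    by measurable
  then show ?thesis by (simp add: borel_prod case_prod_beta')
qed

lemma fs_props:
  fixes M
  assumes r: "0 < r"
  assumes Mdef: "M = fluid_scale r (state z0 B0 D0 xi B D S) t"
  shows "sets M = sets borel"
    and "emeasure M (space M) = ennreal (real (cnt UNIV (job_pts z0 B0 D0 xi B D S (r*t))) / r)"
proof -
  define Z where "Z = state z0 B0 D0 xi B D S (r*t)"
  have sZ: "sets Z = sets borel" by (simp add: Z_def state_def ptmeas_sets)
  have mZ: "emeasure Z UNIV = of_nat (cnt UNIV (job_pts z0 B0 D0 xi B D S (r*t)))"
    by (simp add: Z_def state_def ptmeas_emeasure)
  have meas: "(\<lambda>(x, y). (x, y / ennreal r)) \<in> Z \<rightarrow>\<^sub>M (borel :: pt measure)"
    using rescale_map_meas by (simp add: measurable_cong_sets[OF sZ refl])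
  have M: "M = scale_measure (ennreal (1 / r)) (distr Z borel (\<lambda>(x, y). (x, y / ennreal r)))"
    by (simp add: Mdef fluid_scale_def rescale_def Z_def)
  show "sets M = sets borel" by (simp add: M)
  have spZ: "space Z = UNIV" using sets_eq_imp_space_eq[OF sZ] by simp
  have "emeasure M (space M) = ennreal (1 / r) * emeasure Z UNIV"
    using meas by (simp add: M emeasure_distr spZ space_scale_measure)
  also have "\<dots> = ennreal (1 / r) * ennreal (real (cnt UNIV (job_pts z0 B0 D0 xi B D S (r*t))))"
    by (simp add: mZ ennreal_of_nat_eq_real_of_nat)
  also have "\<dots> = ennreal (real (cnt UNIV (job_pts z0 B0 D0 xi B D S (r*t))) / r)"
    using r by (subst ennreal_mult[symmetric]) auto
  finally show "emeasure M (space M) = ennreal (real (cnt UNIV (job_pts z0 B0 D0 xi B D S (r*t))) / r)" .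
qed

lemma fs_M1:
  assumes r: "0 < r"
  shows "fluid_scale r (state z0 B0 D0 xi B D S) t \<in> M1"
  using fs_props[OF r refl, of z0 B0 D0 xi B D S t] by (simp add: M1_def)

lemma fs_measure:
  assumes r: "0 < r"
  shows "measure (fluid_scale r (state z0 B0 D0 xi B D S) t) (space (fluid_scale r (state z0 B0 D0 xi B D S) t))
     = real (cnt UNIV (job_pts z0 B0 D0 xi B D S (r*t))) / r"
  using fs_props(2)[OF r refl, of z0 B0 D0 xi B D S t] r unfolding measure_def by simp

lemma cnt_job_le: "cnt UNIV (job_pts z0 B0 D0 xi B D S t) \<le> z0 + arr_count xi t"
  using cnt_le_length[of UNIV "job_pts z0 B0 D0 xi B D S t"] job_pts_length[of z0 B0 D0 xi B D S t] by simp

lemma cnt_job_ge0: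
  assumes "S 0 = 0" and "\<And>j. j < z0 \<Longrightarrow> 0 < B0 j \<and> 0 < D0 j"
  shows "z0 \<le> cnt UNIV (job_pts z0 B0 D0 xi B D S 0)"
proof -
  let ?P = "\<lambda>p::pt. p \<in> UNIV \<and> 0 < fst p \<and> 0 < snd p"
  let ?xs = "map (\<lambda>j. (B0 j - ennreal (S 0), D0 j - ennreal 0)) [0..<z0]"
  have "filter ?P ?xs = ?xs" using assms by (intro filter_True) auto
  then have "length (filter ?P ?xs) = z0" by simp
  then show ?thesis unfolding cnt_def job_pts_def by simp
qed

lemma in_sb: "bcont f \<Longrightarrow> open U \<Longrightarrow> {M \<in> M1. (\<integral>p. f p \<partial>M) \<in> U} \<in> sb"
  by (intro CollectI exI[of _ f] exI[of _ U] conjI refl)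

lemma topspace_weak: "topspace weak_top = M1"
proof
  have "\<forall>s\<in>sb. s \<subseteq> M1" by (intro ballI) (erule CollectE, elim exE conjE, simp)
  then show "topspace weak_top \<subseteq> M1" unfolding weak_top_eq topology_generated_by_topspace
    by (intro Union_least) blast
  show "M1 \<subseteq> topspace weak_top"
  proof
    fix M assume M: "M \<in> M1"
    have b: "bcont (\<lambda>_. 0)" by (simp add: bcont_def)
    have "M \<in> {M \<in> M1. (\<integral>p. 0 \<partial>M) \<in> (UNIV::real set)}" using M by simp
    moreover have "{M \<in> M1. (\<integral>p. 0 \<partial>M) \<in> (UNIV::real set)} \<in> sb" by (rule in_sb[OF b open_UNIV])
    ultimately show "M \<in> topspace weak_top" unfolding weak_top_eq topology_generated_by_topspace by (rule UnionI[rotated])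
  qed
qed

lemma Phi_cont:
  fixes h :: "real \<Rightarrow> real"
  assumes h: "continuous_on UNIV h"
  shows "continuous_map weak_top euclideanreal (\<lambda>M. h (\<integral>p. 1 \<partial>M))"
  unfolding continuous_map_def
proof (intro conjI allI impI)
  show "(\<lambda>M. h (\<integral>p. 1 \<partial>M)) \<in> topspace weak_top \<rightarrow> topspace euclideanreal" by simp
  fix U :: "real set" assume "openin euclideanreal U"
  then have oU: "open U" by simp
  have o2: "open (h -` U)" using open_vimage[OF oU h] .
  have b1: "bcont (\<lambda>_. 1)" by (simp add: bcont_def)
  have "{x \<in> topspace weak_top. h (\<integral>p. 1 \<partial>x) \<in> U} = {M \<in> M1. (\<integral>p. 1 \<partial>M) \<in> h -` U}"
    by (auto simp: topspace_weak)
  also have "\<dots> \<in> sb" by (rule in_sb[OF b1 o2])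
  finally show "openin weak_top {x \<in> topspace weak_top. h (\<integral>p. 1 \<partial>x) \<in> U}"
    unfolding weak_top_eq openin_topology_generated_by_iff by (rule generate_topology_on.Basis)
qed

theorem mainTheorem12:
  fixes lam :: real and theta zeta0 :: "pt measure"
    and rr :: "nat \<Rightarrow> real" and Om :: "nat \<Rightarrow> 'w measure"
    and lamr :: "nat \<Rightarrow> real" and xi :: "nat \<Rightarrow> nat \<Rightarrow> 'w \<Rightarrow> real"
    and Bv Dv :: "nat \<Rightarrow> nat \<Rightarrow> 'w \<Rightarrow> ennreal" and thetar :: "nat \<Rightarrow> pt measure"
    and Z0 :: "nat \<Rightarrow> 'w \<Rightarrow> nat" and B0 D0 :: "nat \<Rightarrow> nat \<Rightarrow> 'w \<Rightarrow> ennreal"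
    and S :: "nat \<Rightarrow> 'w \<Rightarrow> real \<Rightarrow> real" and Zc :: "nat \<Rightarrow> 'w \<Rightarrow> real \<Rightarrow> nat"
    and T \<eta> :: real
  \<comment> \<open>fluid data\<close>
  assumes lam_pos: "lam > 0"
    and theta_prob: "prob_space theta" and theta_sets: "sets theta = sets borel"
    and theta_nomass: "emeasure theta ({0} \<times> UNIV) = 0" "emeasure theta (UNIV \<times> {0}) = 0"
                      "emeasure theta {(\<infinity>, \<infinity>)} = 0"
    and rho_gt1: "ennreal lam * (\<integral>\<^sup>+ p. fst p \<partial>theta) > 1"
    and zeta0_M1: "zeta0 \<in> M1"
    and zeta0_noatoms: "\<And>x::real. x \<ge> 0 \<Longrightarrow>
           emeasure zeta0 ({ennreal x} \<times> UNIV) = 0 \<and> emeasure zeta0 (UNIV \<times> {ennreal x}) = 0"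
  \<comment> \<open>the index sequence r\<close>
    and rr_mono: "strict_mono rr" and rr_top: "filterlim rr at_top sequentially"
    and rr_pos: "\<And>n. rr n > 0"
  \<comment> \<open>probability spaces and delayed renewal arrivals of rate lamr n\<close>
    and Om_prob: "\<And>n. prob_space (Om n)"
    and lamr_pos: "\<And>n. lamr n > 0"
    and xi_indep: "\<And>n. prob_space.indep_vars (Om n) (\<lambda>_. borel) (xi n) UNIV"
    and xi_nonneg: "\<And>n k \<omega>. \<omega> \<in> space (Om n) \<Longrightarrow> xi n k \<omega> \<ge> 0"
    and xi_ident: "\<And>n k. distr (Om n) borel (xi n (Suc k)) = distr (Om n) borel (xi n 1)"
    and xi_mean: "\<And>n. integrable (Om n) (xi n 1) \<and> (\<integral>\<omega>. xi n 1 \<omega> \<partial>Om n) = 1 / lamr n"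
  \<comment> \<open>i.i.d. job pairs with law thetar n\<close>
    and pairs_indep: "\<And>n. prob_space.indep_vars (Om n) (\<lambda>_. borel) (\<lambda>i \<omega>. (Bv n i \<omega>, Dv n i \<omega>)) UNIV"
    and pairs_law: "\<And>n i. distr (Om n) borel (\<lambda>\<omega>. (Bv n i \<omega>, Dv n i \<omega>)) = thetar n"
    and thetar_nomass: "\<And>n. emeasure (thetar n) ({0} \<times> UNIV) = 0 \<and> emeasure (thetar n) (UNIV \<times> {0}) = 0
                              \<and> emeasure (thetar n) {(\<infinity>, \<infinity>)} = 0"
  \<comment> \<open>initial condition\<close>
    and Z0_meas: "\<And>n. Z0 n \<in> measurable (Om n) (count_space UNIV)"
    and Z0_mean: "\<And>n. integrable (Om n) (\<lambda>\<omega>. real (Z0 n \<omega>))"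
    and init_indep: "\<And>n. prob_space.indep_vars (Om n) (\<lambda>_. borel) (\<lambda>j \<omega>. (B0 n j \<omega>, D0 n j \<omega>)) UNIV"
    and init_ident: "\<And>n j. distr (Om n) borel (\<lambda>\<omega>. (B0 n j \<omega>, D0 n j \<omega>))
                          = distr (Om n) borel (\<lambda>\<omega>. (B0 n 0 \<omega>, D0 n 0 \<omega>))"
    and init_vals: "\<And>n j \<omega>. \<omega> \<in> space (Om n) \<Longrightarrow>
           0 < B0 n j \<omega> \<and> 0 < D0 n j \<omega> \<and> \<not> (B0 n j \<omega> = \<infinity> \<and> D0 n j \<omega> = \<infinity>)"
  \<comment> \<open>processor sharing dynamics: S is the cumulative service per job, Zc the number of jobs\<close>
    and dynamics: "\<And>n \<omega> t. \<omega> \<in> space (Om n) \<Longrightarrow> t \<ge> 0 \<Longrightarrow>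
           (\<lambda>s. if Zc n \<omega> s = 0 then 0 else 1 / real (Zc n \<omega> s)) integrable_on {0..t}
         \<and> S n \<omega> t = integral {0..t} (\<lambda>s. if Zc n \<omega> s = 0 then 0 else 1 / real (Zc n \<omega> s))
         \<and> emeasure (state (Z0 n \<omega>) (\<lambda>j. B0 n j \<omega>) (\<lambda>j. D0 n j \<omega>) (\<lambda>k. xi n k \<omega>)
                      (\<lambda>i. Bv n i \<omega>) (\<lambda>i. Dv n i \<omega>) (S n \<omega>) t) UNIV = of_nat (Zc n \<omega> t)"
  \<comment> \<open>convergence assumptions\<close>
    and arrivals_conv: "\<And>T' \<epsilon>. T' > 0 \<Longrightarrow> \<epsilon> > 0 \<Longrightarrow>
           (\<lambda>n. outer_prob (Om n) {\<omega> \<in> space (Om n). \<exists>t\<in>{0..T'}.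
               \<bar>real (arr_count (\<lambda>k. xi n k \<omega>) (rr n * t)) / rr n - lam * t\<bar> > \<epsilon>}) \<longlonglongrightarrow> 0"
    and theta_conv: "weak_conv (\<lambda>n. rescale (rr n) (thetar n)) theta"
    and init_conv: "conv_distr_M1 Om
           (\<lambda>n \<omega>. fluid_scale (rr n) (state (Z0 n \<omega>) (\<lambda>j. B0 n j \<omega>) (\<lambda>j. D0 n j \<omega>) (\<lambda>k. xi n k \<omega>)
                      (\<lambda>i. Bv n i \<omega>) (\<lambda>i. Dv n i \<omega>) (S n \<omega>)) 0) zeta0"
    and T_pos: "T > 0" and eta_pos: "\<eta> > 0"
  shows "\<exists>K. compactin weak_top K \<and>
     liminf (\<lambda>n. ereal (inner_prob (Om n) {\<omega> \<in> space (Om n). \<forall>t\<in>{0..T}.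
        fluid_scale (rr n) (state (Z0 n \<omega>) (\<lambda>j. B0 n j \<omega>) (\<lambda>j. D0 n j \<omega>) (\<lambda>k. xi n k \<omega>)
                      (\<lambda>i. Bv n i \<omega>) (\<lambda>i. Dv n i \<omega>) (S n \<omega>)) t \<in> K})) \<ge> ereal (1 - \<eta>)"
proof -
  define X where "X n \<omega> t = fluid_scale (rr n) (state (Z0 n \<omega>) (\<lambda>j. B0 n j \<omega>) (\<lambda>j. D0 n j \<omega>) (\<lambda>k. xi n k \<omega>)
                      (\<lambda>i. Bv n i \<omega>) (\<lambda>i. Dv n i \<omega>) (S n \<omega>)) t" for n \<omega> t
  define jp where "jp n \<omega> t = job_pts (Z0 n \<omega>) (\<lambda>j. B0 n j \<omega>) (\<lambda>j. D0 n j \<omega>) (\<lambda>k. xi n k \<omega>)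
                      (\<lambda>i. Bv n i \<omega>) (\<lambda>i. Dv n i \<omega>) (S n \<omega>) t" for n \<omega> t
  define E where "E n \<omega> t = arr_count (\<lambda>k. xi n k \<omega>) t" for n \<omega> t
  define C0 where "C0 = measure zeta0 (space zeta0)"
  have C0: "0 \<le> C0" by (simp add: C0_def)
  define Cm where "Cm = C0 + 1 + (lam * T + 1)"
  have Cm: "0 \<le> Cm" using C0 lam_pos T_pos by (simp add: Cm_def)
  obtain K where K: "compactin weak_top K" and Ksub: "{M \<in> M1. emeasure M (space M) \<le> ennreal Cm} \<subseteq> K"
    using exists_compact_mass[OF Cm] by blast
  have XM1: "X n \<omega> t \<in> M1" for n \<omega> t unfolding X_def by (rule fs_M1[OF rr_pos])
  have Xem: "emeasure (X n \<omega> t) (space (X n \<omega> t)) = ennreal (real (cnt UNIV (jp n \<omega> (rr n * t))) / rr n)" for n \<omega> t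
    unfolding X_def jp_def by (rule fs_props(2)[OF rr_pos refl])
  have Xmeas: "measure (X n \<omega> t) (space (X n \<omega> t)) = real (cnt UNIV (jp n \<omega> (rr n * t))) / rr n" for n \<omega> t
    unfolding X_def jp_def by (rule fs_measure[OF rr_pos])
  have cnt_le: "cnt UNIV (jp n \<omega> t) \<le> Z0 n \<omega> + E n \<omega> t" for n \<omega> t
    unfolding jp_def E_def by (rule cnt_job_le)
  have S0: "S n \<omega> 0 = 0" if "\<omega> \<in> space (Om n)" for n \<omega>
    using dynamics[of \<omega> n 0] that by simp
  have cnt_ge: "Z0 n \<omega> \<le> cnt UNIV (jp n \<omega> 0)" if "\<omega> \<in> space (Om n)" for n \<omega>
    unfolding jp_def using S0[OF that] init_vals[OF that] by (intro cnt_job_ge0) auto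
  define h :: "real \<Rightarrow> real" where "h x = max 0 (min 1 (C0 + 1 - x))" for x
  have hc: "continuous_on UNIV h" unfolding h_def by (intro continuous_intros)
  define \<Phi> where "\<Phi> M = h (\<integral>p. 1 \<partial>M)" for M :: "pt measure"
  have \<Phi>c: "continuous_map weak_top euclideanreal \<Phi>" unfolding \<Phi>_def by (rule Phi_cont[OF hc])
  have \<Phi>rng: "0 \<le> \<Phi> M \<and> \<Phi> M \<le> 1" for M by (simp add: \<Phi>_def h_def)
  have \<Phi>b: "bounded (\<Phi> ` M1)" unfolding bounded_iff using \<Phi>rng by (intro exI[of _ 1]) auto
  have \<Phi>z: "\<Phi> zeta0 = 1" by (simp add: \<Phi>_def h_def C0_def)
  have "continuous_map weak_top euclideanreal \<Phi> \<and> bounded (\<Phi> ` M1) \<longrightarrow>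
     (\<lambda>n. \<integral>\<omega>. \<Phi> (X n \<omega> 0) \<partial>Om n) \<longlonglongrightarrow> \<Phi> zeta0"
    using init_conv unfolding conv_distr_M1_def X_def by (rule spec)
  then have conv0: "(\<lambda>n. \<integral>\<omega>. \<Phi> (X n \<omega> 0) \<partial>Om n) \<longlonglongrightarrow> 1"
    using mp conjI[OF \<Phi>c \<Phi>b] unfolding \<Phi>z by blast
  define A where "A n = {\<omega> \<in> space (Om n). 0 < \<Phi> (X n \<omega> 0)}" for n
  have A_Z0: "real (Z0 n \<omega>) / rr n < C0 + 1" if "\<omega> \<in> A n" for n \<omega>
  proof -
    have sp: "\<omega> \<in> space (Om n)" and pos: "0 < \<Phi> (X n \<omega> 0)" using that by (auto simp: A_def)
    have "0 < C0 + 1 - measure (X n \<omega> 0) (space (X n \<omega> 0))"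
      using pos by (auto simp: \<Phi>_def h_def)
    moreover have "real (Z0 n \<omega>) / rr n \<le> measure (X n \<omega> 0) (space (X n \<omega> 0))"
      unfolding Xmeas using cnt_ge[OF sp] rr_pos[of n] by (simp add: divide_right_mono)
    ultimately show ?thesis by linarith
  qed
  define Bad where "Bad n = {\<omega> \<in> space (Om n). \<exists>t\<in>{0..T}.
               \<bar>real (arr_count (\<lambda>k. xi n k \<omega>) (rr n * t)) / rr n - lam * t\<bar> > 1}" for n
  define op where "op n = outer_prob (Om n) (Bad n)" for n
  have op0: "op \<longlonglongrightarrow> 0" unfolding op_def Bad_def using arrivals_conv[OF T_pos zero_less_one] .
  have "\<exists>B. B \<in> sets (Om n) \<and> Bad n \<subseteq> B \<and> measure (Om n) B < op n + 1 / real (Suc n)" for n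
  proof -
    let ?S = "{measure (Om n) B | B. B \<in> sets (Om n) \<and> Bad n \<subseteq> B}"
    have sp: "space (Om n) \<in> sets (Om n)" by simp
    have bs: "Bad n \<subseteq> space (Om n)" unfolding Bad_def by (rule Collect_subset)
    have "measure (Om n) (space (Om n)) \<in> ?S" using sp bs by blast
    then have ne: "?S \<noteq> {}" by blast
    have lt: "Inf ?S < op n + 1 / real (Suc n)" by (simp add: op_def outer_prob_def)
    obtain x where "x \<in> ?S" "x < op n + 1 / real (Suc n)" using cInf_lessD[OF ne lt] by blast
    then obtain B where "x = measure (Om n) B" "B \<in> sets (Om n)" "Bad n \<subseteq> B" by blast
    then show ?thesis using \<open>x < op n + 1 / real (Suc n)\<close> by (intro exI[of _ B]) simp
  qed
  then have "\<forall>n. \<exists>B. B \<in> sets (Om n) \<and> Bad n \<subseteq> B \<and> measure (Om n) B < op n + 1 / real (Suc n)"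
    by (rule allI)
  then have "\<exists>Bb. \<forall>n. Bb n \<in> sets (Om n) \<and> Bad n \<subseteq> Bb n \<and> measure (Om n) (Bb n) < op n + 1 / real (Suc n)"
    by (rule choice)
  then obtain Bb where Bb': "\<forall>n. Bb n \<in> sets (Om n) \<and> Bad n \<subseteq> Bb n \<and> measure (Om n) (Bb n) < op n + 1 / real (Suc n)"
    by blast
  have Bb: "\<And>n. Bb n \<in> sets (Om n)" "\<And>n. Bad n \<subseteq> Bb n"
    "\<And>n. measure (Om n) (Bb n) < op n + 1 / real (Suc n)" using Bb' by auto
  define Ev where "Ev n = {\<omega> \<in> space (Om n). \<forall>t\<in>{0..T}. X n \<omega> t \<in> K}" for n
  have GinEv: "A n - Bb n \<subseteq> Ev n" for n
  proof
    fix \<omega> assume \<omega>: "\<omega> \<in> A n - Bb n"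
    then have sp: "\<omega> \<in> space (Om n)" and a: "\<omega> \<in> A n" and nb: "\<omega> \<notin> Bad n" using Bb(2)[of n] by (auto simp: A_def)
    have "X n \<omega> t \<in> K" if t: "t \<in> {0..T}" for t
    proof -
      have "\<not> \<bar>real (E n \<omega> (rr n * t)) / rr n - lam * t\<bar> > 1" using nb sp t by (auto simp: Bad_def E_def)
      then have e0: "real (E n \<omega> (rr n * t)) / rr n - lam * t \<le> 1"
        unfolding not_less abs_le_iff by linarith
      have lt: "lam * t \<le> lam * T" using t lam_pos by (intro mult_left_mono) auto
      have e1: "real (E n \<omega> (rr n * t)) / rr n \<le> lam * T + 1" using e0 lt by linarith
      have "real (cnt UNIV (jp n \<omega> (rr n * t))) / rr n \<le> (real (Z0 n \<omega>) + real (E n \<omega> (rr n * t))) / rr n"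
        using cnt_le[of n \<omega> "rr n * t"] rr_pos[of n] by (intro divide_right_mono) auto
      also have "\<dots> = real (Z0 n \<omega>) / rr n + real (E n \<omega> (rr n * t)) / rr n" by (simp add: add_divide_distrib)
      also have "\<dots> \<le> Cm" using A_Z0[OF a] e1 by (simp add: Cm_def)
      finally have "emeasure (X n \<omega> t) (space (X n \<omega> t)) \<le> ennreal Cm" unfolding Xem by (rule ennreal_leI)
      then show ?thesis using Ksub XM1 by blast
    qed
    then show "\<omega> \<in> Ev n" using sp by (simp add: Ev_def)
  qed
  define L where "L n = (\<integral>\<omega>. \<Phi> (X n \<omega> 0) \<partial>Om n) - op n - 1 / real (Suc n)" for n
  have L1: "L \<longlonglongrightarrow> 1 - 0 - 0" unfolding L_def
    by (intro tendsto_diff conv0 op0) (use LIMSEQ_inverse_real_of_nat in \<open>simp add: inverse_eq_divide\<close>)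
  have ev_int: "eventually (\<lambda>n. (\<integral>\<omega>. \<Phi> (X n \<omega> 0) \<partial>Om n) > 1/2) sequentially"
    using order_tendstoD(1)[OF conv0, of "1/2"] by simp
  have ev_L: "eventually (\<lambda>n. L n > 1 - \<eta>) sequentially"
    using order_tendstoD(1)[OF L1, of "1 - \<eta>"] eta_pos by simp
  have "eventually (\<lambda>n. ereal (1 - \<eta>) \<le> ereal (inner_prob (Om n) (Ev n))) sequentially"
    using ev_int ev_L
  proof eventually_elim
    case (elim n)
    interpret P: prob_space "Om n" by (rule Om_prob)
    have int: "integrable (Om n) (\<lambda>\<omega>. \<Phi> (X n \<omega> 0))"
      using elim(1) not_integrable_integral_eq by fastforce
    then have meas: "(\<lambda>\<omega>. \<Phi> (X n \<omega> 0)) \<in> borel_measurable (Om n)" by auto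
    have Asets: "A n \<in> sets (Om n)" unfolding A_def using meas by measurable
    have "(\<integral>\<omega>. \<Phi> (X n \<omega> 0) \<partial>Om n) \<le> (\<integral>\<omega>. indicator (A n) \<omega> \<partial>Om n)"
    proof (rule integral_mono[OF int])
      show "integrable (Om n) (indicator (A n) :: _ \<Rightarrow> real)"
        using Asets by (intro integrable_real_indicator) (simp_all add: less_top[symmetric])
      fix \<omega> assume "\<omega> \<in> space (Om n)"
      then show "\<Phi> (X n \<omega> 0) \<le> indicator (A n) \<omega>" using \<Phi>rng[of "X n \<omega> 0"]
        by (cases "\<omega> \<in> A n") (auto simp: A_def)
    qed
    also have "\<dots> = measure (Om n) (A n)" using Asets by (simp add: Int_absorb2 sets.sets_into_space)
    finally have mA: "(\<integral>\<omega>. \<Phi> (X n \<omega> 0) \<partial>Om n) \<le> measure (Om n) (A n)" .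
    have Gsets: "A n - Bb n \<in> sets (Om n)" using Asets Bb(1) by auto
    have "measure (Om n) (A n) \<le> measure (Om n) ((A n - Bb n) \<union> Bb n)"
      using Asets Bb(1)[of n] by (intro P.finite_measure_mono) auto
    also have "\<dots> \<le> measure (Om n) (A n - Bb n) + measure (Om n) (Bb n)"
      using Gsets Bb(1)[of n] by (intro measure_subadditive) auto
    finally have "measure (Om n) (A n) \<le> measure (Om n) (A n - Bb n) + measure (Om n) (Bb n)" .
    then have mG: "L n \<le> measure (Om n) (A n - Bb n)"
      using mA Bb(3)[of n] by (simp add: L_def)
    have "measure (Om n) (A n - Bb n) \<le> inner_prob (Om n) (Ev n)"
      unfolding inner_prob_def
    proof (rule cSup_upper)
      show "measure (Om n) (A n - Bb n) \<in> {measure (Om n) B |B. B \<in> sets (Om n) \<and> B \<subseteq> Ev n}"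
        using Gsets GinEv by blast
      show "bdd_above {measure (Om n) B |B. B \<in> sets (Om n) \<and> B \<subseteq> Ev n}"
        by (rule bdd_aboveI[of _ 1]) auto
    qed
    then show ?case using mG elim(2) by simp
  qed
  then have "ereal (1 - \<eta>) \<le> liminf (\<lambda>n. ereal (inner_prob (Om n) (Ev n)))"
    by (rule Liminf_bounded)
  then have "ereal (1 - \<eta>) \<le> liminf (\<lambda>n. ereal (inner_prob (Om n) {\<omega> \<in> space (Om n). \<forall>t\<in>{0..T}.
        fluid_scale (rr n) (state (Z0 n \<omega>) (\<lambda>j. B0 n j \<omega>) (\<lambda>j. D0 n j \<omega>) (\<lambda>k. xi n k \<omega>)
                      (\<lambda>i. Bv n i \<omega>) (\<lambda>i. Dv n i \<omega>) (S n \<omega>)) t \<in> K}))"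
    unfolding Ev_def X_def .
  with K show ?thesis by (intro exI[of _ K] conjI)
qed

end
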